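(* Let $0<a_{1}<a_{2}$, let $\pi(x)=a_{1}e^{-a_{1}x}$ and $q(x)=a_{2}e^{-a_{2}x}$ on $\mathsf{E}=(0,\infty)$, and let $P$ be the Independent Metropolis–Hastings kernel with target $\pi$ and proposal $q$: \[ P(x,\mathrm{d}y)=\Big[1\wedge\frac{w(y)}{w(x)}\Big]q(y)\,\mathrm{d}y+\rho(x)\delta_{x}(\mathrm{d}y),\quad w=\pi/q,\quad\rho(x)=1-\int\Big[1\wedge\frac{w(y)}{w(x)}\Big]q(y)\,\mathrm{d}y. \] Then there exists $C>0$ such that for all $f\in\mathrm{L}_{0}^{2}(\pi)$ and $n\in\mathbb{N}$, \[ \|P^{n}f\|_{2}^{2}\le C\|f\|_{\mathrm{osc}}^{2}\,n^{-\frac{a_{1}}{a_{2}-a_{1}}}. \]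
   Context: $\|\cdot\|_{2}$ and $\mathrm{L}_{0}^{2}(\pi)$ (mean-zero square-integrable functions) refer to the measure $\pi(x)\mathrm{d}x$; $\|f\|_{\mathrm{osc}}=\operatorname{ess\,sup}f-\operatorname{ess\,inf}f$; $P^{n}f(x)=\int P^{n}(x,\mathrm{d}y)f(y)$. *)

theory Defs
  imports "HOL-Probability.Probability"
begin

definition exp_dens :: "real \<Rightarrow> real \<Rightarrow> real" where
  "exp_dens a x = a * exp (- a * x)"

definition imh_w :: "real \<Rightarrow> real \<Rightarrow> real \<Rightarrow> real" where
  "imh_w a1 a2 x = exp_dens a1 x / exp_dens a2 x"

definition imh_acc :: "real \<Rightarrow> real \<Rightarrow> real \<Rightarrow> real \<Rightarrow> real" where
  "imh_acc a1 a2 x y = min 1 (imh_w a1 a2 y / imh_w a1 a2 x)"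

definition imh_rho :: "real \<Rightarrow> real \<Rightarrow> real \<Rightarrow> real" where
  "imh_rho a1 a2 x = 1 - (LINT y:{0<..}|lborel. imh_acc a1 a2 x y * exp_dens a2 y)"

definition imh_P :: "real \<Rightarrow> real \<Rightarrow> (real \<Rightarrow> real) \<Rightarrow> real \<Rightarrow> real" where
  "imh_P a1 a2 f x =
     (LINT y:{0<..}|lborel. imh_acc a1 a2 x y * exp_dens a2 y * f y) + imh_rho a1 a2 x * f x"

definition piM :: "real \<Rightarrow> real measure" where
  "piM a1 = density lborel (\<lambda>x. ennreal (indicator {0<..} x * exp_dens a1 x))"

definition L2_0 :: "real measure \<Rightarrow> (real \<Rightarrow> real) set" where
  "L2_0 M = {f. f \<in> borel_measurable M \<and> integrable M (\<lambda>x. (f x)\<^sup>2) \<and> integral\<^sup>L M f = 0}"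

text \<open>Oscillation ess sup f - ess inf f (extended real; may be infinite).\<close>
definition osc :: "real measure \<Rightarrow> (real \<Rightarrow> real) \<Rightarrow> ereal" where
  "osc M f = esssup M (\<lambda>x. ereal (f x)) - (- esssup M (\<lambda>x. - ereal (f x)))"

end

theory Submission
  imports Defs
begin

lemma FTC_Ioi:
  fixes f F :: "real \<Rightarrow> real"
  assumes "\<And>x. c < x \<Longrightarrow> DERIV F x :> f x" "\<And>x. c < x \<Longrightarrow> isCont f x"
    "\<And>x. c < x \<Longrightarrow> 0 \<le> f x" "(F \<longlongrightarrow> A) (at_right c)" "(F \<longlongrightarrow> B) at_top"
  shows "set_integrable lborel {c<..} f" "(LINT x:{c<..}|lborel. f x) = B - A"
proof -
  have e: "einterval (ereal c) \<infinity> = {c<..}" by (auto simp: einterval_iff)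
  have 1: "set_integrable lborel (einterval (ereal c) \<infinity>) f" "(LBINT x=ereal c..\<infinity>. f x) = B - A"
    by (rule interval_integral_FTC_nonneg[where F=F and A=A and B=B];
        use assms in \<open>auto simp: ereal_tendsto_simps\<close>)+
  show "set_integrable lborel {c<..} f" using 1(1) e by simp
  show "(LINT x:{c<..}|lborel. f x) = B - A" using 1(2) by (simp add: interval_integral_Ioi)
qed

lemma FTC_Ioc:
  fixes f F :: "real \<Rightarrow> real"
  assumes "c \<le> d" "\<And>x. c \<le> x \<Longrightarrow> x \<le> d \<Longrightarrow> DERIV F x :> f x" "\<And>x. c \<le> x \<Longrightarrow> x \<le> d \<Longrightarrow> isCont f x"
  shows "set_integrable lborel {c<..d} f" "(LINT x:{c<..d}|lborel. f x) = F d - F c"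
proof -
  have "set_integrable lborel {c..d} f"
    by (rule borel_integrable_atLeastAtMost') (use assms in \<open>auto intro: continuous_at_imp_continuous_on\<close>)
  then show "set_integrable lborel {c<..d} f"
    by (rule set_integrable_subset) auto
  have "(LBINT x=c..d. f x) = F d - F c"
    by (rule interval_integral_FTC_finite)
       (use assms in \<open>auto intro!: continuous_at_imp_continuous_on simp: has_real_derivative_iff_has_vector_derivative[symmetric] intro: DERIV_subset\<close>)
  then show "(LINT x:{c<..d}|lborel. f x) = F d - F c"
    using assms(1) by (simp add: interval_integral_Ioc)
qed


lemma exp_neg_pow_bound:
  fixes x :: real assumes "0 < x" "0 < k"
  shows "exp (- x) \<le> (real k / x) ^ k"
proof -
  have "x / real k \<le> exp (x / real k)"
    using exp_ge_add_one_self[of "x / real k"] by linarith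
  hence "(x / real k) ^ k \<le> exp (x / real k) ^ k"
    using assms by (intro power_mono) auto
  also have "\<dots> = exp x" using assms by (simp add: exp_of_nat_mult[symmetric])
  finally have "(x / real k) ^ k \<le> exp x" .
  hence "1 / exp x \<le> 1 / (x / real k) ^ k" using assms
    by (intro divide_left_mono) auto
  thus ?thesis by (simp add: exp_minus field_simps power_divide inverse_eq_divide)
qed

locale imh =
  fixes a1 a2 :: real
  assumes a1pos: "0 < a1" and a12: "a1 < a2"
begin

definition pd :: "real \<Rightarrow> real" where "pd x = a1 * exp (- a1 * x)"
definition qd :: "real \<Rightarrow> real" where "qd x = a2 * exp (- a2 * x)"
definition hh :: "real \<Rightarrow> real" where "hh x = (a2 / a1) * exp (- (a2 - a1) * x)"
definition Pi :: "real \<Rightarrow> real" where "Pi x = 1 - exp (- a1 * x)"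
definition al :: "real \<Rightarrow> real" where "al x = hh x * Pi x + exp (- a2 * x)"
definition rh :: "real \<Rightarrow> real" where "rh x = 1 - al x"

lemma a2pos: "0 < a2" using a1pos a12 by simp
lemma ratio_pos: "0 < a2 / a1" using a1pos a2pos by simp

lemma pd_pos: "0 < pd x" using a1pos by (simp add: pd_def)
lemma qd_pos: "0 < qd x" using a2pos by (simp add: qd_def)
lemma hh_pos: "0 < hh x" using a1pos a2pos by (simp add: hh_def)
lemma hh_pd: "hh x * pd x = qd x"
  using a1pos by (simp add: hh_def pd_def qd_def exp_add[symmetric] algebra_simps)
lemma hh_mono: "x \<le> y \<Longrightarrow> hh y \<le> hh x"
proof -
  assume "x \<le> y"
  hence "exp (- (a2 - a1) * y) \<le> exp (- (a2 - a1) * x)" using a12 by (simp add: mult_left_mono)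
  thus ?thesis unfolding hh_def using a1pos a2pos by (intro mult_left_mono) auto
qed
lemma hh_le: "0 \<le> x \<Longrightarrow> hh x \<le> a2 / a1"
  using hh_mono[of 0 x] by (simp add: hh_def)
lemma Pi_pos: "0 < x \<Longrightarrow> 0 < Pi x" using a1pos by (simp add: Pi_def)
lemma Pi_le1: "Pi x \<le> 1" by (simp add: Pi_def)

lemma kern: "imh_acc a1 a2 x y * exp_dens a2 y = hh (max x y) * pd y"
proof -
  have w: "imh_w a1 a2 z = (a1 / a2) * exp ((a2 - a1) * z)" for z
  proof -
    have "exp (- a1 * z) / exp (- a2 * z) = exp ((a2 - a1) * z)"
      by (simp add: exp_diff[symmetric] algebra_simps)
    thus ?thesis using a1pos a2pos unfolding imh_w_def exp_dens_def
      by (simp add: field_simps)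
  qed
  have r: "imh_w a1 a2 y / imh_w a1 a2 x = exp ((a2 - a1) * (y - x))"
    using a1pos a2pos by (simp add: w exp_diff[symmetric] algebra_simps)
  show ?thesis
  proof (cases "x \<le> y")
    case True
    hence "1 \<le> exp ((a2 - a1) * (y - x))" using a12 by simp
    thus ?thesis using True hh_pd[of y]
      by (simp add: imh_acc_def r qd_def exp_dens_def max_def)
  next
    case False
    hence "exp ((a2 - a1) * (y - x)) \<le> 1" using a12 by (simp add: mult_nonneg_nonpos)
    hence "imh_acc a1 a2 x y = exp ((a2 - a1) * (y - x))" by (simp add: imh_acc_def r)
    thus ?thesis using False a1pos
      by (simp add: exp_dens_def hh_def pd_def max_def exp_add[symmetric] algebra_simps)
  qed
qed

lemma int_exp_Ioi:
  fixes a c :: real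
  assumes "0 < a"
  shows "set_integrable lborel {c<..} (\<lambda>x. a * exp (- a * x))"
    "(LINT x:{c<..}|lborel. a * exp (- a * x)) = exp (- a * c)"
proof -
  have lim: "((\<lambda>x. - exp (- a * x)) \<longlongrightarrow> - exp (- a * c)) (at_right c)"
    by (intro tendsto_intros)
  have "filterlim (\<lambda>x. a * x) at_top at_top"
    by (rule filterlim_tendsto_pos_mult_at_top[OF tendsto_const assms filterlim_ident])
  hence "filterlim (\<lambda>x. - a * x) at_bot at_top" by (simp add: filterlim_uminus_at_bot)
  hence "((\<lambda>x. exp (- a * x)) \<longlongrightarrow> 0) at_top" by (rule filterlim_compose[OF exp_at_bot])
  hence lim2: "((\<lambda>x. - exp (- a * x)) \<longlongrightarrow> - 0) at_top" by (rule tendsto_minus)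
  note * = FTC_Ioi[where F="\<lambda>x. - exp (- a * x)", OF _ _ _ lim lim2, simplified]
  show "set_integrable lborel {c<..} (\<lambda>x. a * exp (- a * x))"
    by (rule *) (use assms in \<open>auto intro!: derivative_eq_intros\<close>)
  show "(LINT x:{c<..}|lborel. a * exp (- a * x)) = exp (- a * c)"
    by (subst *) (use assms in \<open>auto intro!: derivative_eq_intros\<close>)
qed

lemma int_exp_Ioc:
  fixes a c d :: real
  assumes "c \<le> d"
  shows "set_integrable lborel {c<..d} (\<lambda>x. a * exp (- a * x))"
    "(LINT x:{c<..d}|lborel. a * exp (- a * x)) = exp (- a * c) - exp (- a * d)"
proof -
  note * = FTC_Ioc[where F="\<lambda>x. - exp (- a * x)", OF assms]
  show "set_integrable lborel {c<..d} (\<lambda>x. a * exp (- a * x))"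
    by (rule *) (auto intro!: derivative_eq_intros)
  show "(LINT x:{c<..d}|lborel. a * exp (- a * x)) = exp (- a * c) - exp (- a * d)"
    by (subst *) (auto intro!: derivative_eq_intros)
qed

lemma pd_int: "set_integrable lborel {c<..} pd" "(LINT x:{c<..}|lborel. pd x) = exp (- a1 * c)"
  using int_exp_Ioi[OF a1pos, of c] unfolding pd_def by auto

lemma qd_int: "set_integrable lborel {c<..} qd" "(LINT x:{c<..}|lborel. qd x) = exp (- a2 * c)"
  using int_exp_Ioi[OF a2pos, of c] unfolding qd_def by auto

lemma pd_int_Ioc: "c \<le> d \<Longrightarrow> set_integrable lborel {c<..d} pd"
  "c \<le> d \<Longrightarrow> (LINT x:{c<..d}|lborel. pd x) = exp (- a1 * c) - exp (- a1 * d)"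
  using int_exp_Ioc[of c d a1] unfolding pd_def by auto

lemma qd_int_Ioc: "c \<le> d \<Longrightarrow> set_integrable lborel {c<..d} qd"
  "c \<le> d \<Longrightarrow> (LINT x:{c<..d}|lborel. qd x) = exp (- a2 * c) - exp (- a2 * d)"
  using int_exp_Ioc[of c d a2] unfolding qd_def by auto

lemma pd_measurable[measurable]: "pd \<in> borel_measurable borel"
  unfolding pd_def by measurable
lemma qd_measurable[measurable]: "qd \<in> borel_measurable borel"
  unfolding qd_def by measurable
lemma hh_measurable[measurable]: "hh \<in> borel_measurable borel"
  unfolding hh_def by measurable
lemma Pi_measurable[measurable]: "Pi \<in> borel_measurable borel"
  unfolding Pi_def by measurable
lemma al_measurable[measurable]: "al \<in> borel_measurable borel"
  unfolding al_def by measurable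
lemma rh_measurable[measurable]: "rh \<in> borel_measurable borel"
  unfolding rh_def by measurable

lemma dom_pd:
  assumes [measurable]: "g \<in> borel_measurable borel" and "\<And>y. c < y \<Longrightarrow> \<bar>g y\<bar> \<le> C * pd y"
  shows "set_integrable lborel {c<..} g"
proof (rule set_integrable_bound[where f="\<lambda>y. C * pd y"])
  show "set_integrable lborel {c<..} (\<lambda>y. C * pd y)" using pd_int(1) by simp
  show "set_borel_measurable lborel {c<..} g" unfolding set_borel_measurable_def by measurable
  show "AE x in lborel. x \<in> {c<..} \<longrightarrow> norm (g x) \<le> norm (C * pd x)"
    using assms(2) by (auto intro: order_trans[OF _ abs_ge_self])
qed

lemma split_Ioi:
  fixes g :: "real \<Rightarrow> real"
  assumes "set_integrable lborel {c<..} g" "c \<le> d"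
  shows "set_integrable lborel {c<..d} g" "set_integrable lborel {d<..} g"
    "(LINT y:{c<..}|lborel. g y) = (LINT y:{c<..d}|lborel. g y) + (LINT y:{d<..}|lborel. g y)"
proof -
  show 1: "set_integrable lborel {c<..d} g" by (rule set_integrable_subset[OF assms(1)]) auto
  show 2: "set_integrable lborel {d<..} g" by (rule set_integrable_subset[OF assms(1)]) (use assms in auto)
  have e: "{c<..} = {c<..d} \<union> {d<..}" using assms by auto
  have "(LINT y:{c<..d} \<union> {d<..}|lborel. g y) = (LINT y:{c<..d}|lborel. g y) + (LINT y:{d<..}|lborel. g y)"
    by (rule set_integral_Un[OF _ 1 2]) auto
  thus "(LINT y:{c<..}|lborel. g y) = (LINT y:{c<..d}|lborel. g y) + (LINT y:{d<..}|lborel. g y)"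
    by (simp only: e)
qed

lemma kint:
  assumes "0 < x"
  shows "set_integrable lborel {0<..} (\<lambda>y. hh (max x y) * pd y)"
    "(LINT y:{0<..}|lborel. hh (max x y) * pd y) = al x"
proof -
  show I: "set_integrable lborel {0<..} (\<lambda>y. hh (max x y) * pd y)"
  proof (rule dom_pd[where C="a2/a1"])
    fix y :: real assume "0 < y"
    hence "hh (max x y) \<le> a2 / a1" using hh_le[of "max x y"] by simp
    hence "hh (max x y) * pd y \<le> a2 / a1 * pd y"
      by (rule mult_right_mono) (use pd_pos[of y] in simp)
    thus "\<bar>hh (max x y) * pd y\<bar> \<le> a2 / a1 * pd y"
      using hh_pos[of "max x y"] pd_pos[of y] by simp
  qed measurable
  note sp = split_Ioi[OF I less_imp_le[OF assms]]
  have 1: "(LINT y:{0<..x}|lborel. hh (max x y) * pd y) = (LINT y:{0<..x}|lborel. hh x * pd y)"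
    by (rule set_lebesgue_integral_cong) auto
  have 2: "(LINT y:{x<..}|lborel. hh (max x y) * pd y) = (LINT y:{x<..}|lborel. qd y)"
    by (rule set_lebesgue_integral_cong) (auto simp: hh_pd)
  show "(LINT y:{0<..}|lborel. hh (max x y) * pd y) = al x"
  proof -
    have 3: "(LINT y:{0<..x}|lborel. hh x * pd y) = hh x * Pi x"
      using pd_int_Ioc(2)[of 0 x] assms by (simp add: Pi_def)
    show ?thesis unfolding sp(3) 1 2 3 qd_int(2) al_def by simp
  qed
qed

lemma al_ge: "0 \<le> x \<Longrightarrow> exp (- (a2 - a1) * x) \<le> al x"
proof -
  assume x: "0 \<le> x"
  have "exp (- (a2 - a1) * x) = exp (- (a2 - a1) * x) * (Pi x + exp (- a1 * x))"
    by (simp add: Pi_def)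
  also have "\<dots> = exp (- (a2 - a1) * x) * Pi x + exp (- a2 * x)"
    by (simp add: algebra_simps exp_add[symmetric])
  also have "\<dots> \<le> hh x * Pi x + exp (- a2 * x)"
  proof -
    have "0 \<le> Pi x" using x a1pos by (simp add: Pi_def)
    moreover have "1 * exp (- (a2 - a1) * x) \<le> hh x"
      unfolding hh_def by (rule mult_right_mono) (use a1pos a12 in auto)
    ultimately show ?thesis by (simp add: mult_right_mono)
  qed
  finally show ?thesis by (simp add: al_def)
qed

lemma al_le1: "0 < x \<Longrightarrow> al x \<le> 1"
proof -
  assume x: "0 < x"
  have "al x = (LINT y:{0<..}|lborel. hh (max x y) * pd y)" using kint[OF x] by simp
  also have "\<dots> \<le> (LINT y:{0<..}|lborel. qd y)"
  proof (rule set_integral_mono[OF kint(1)[OF x] qd_int(1)])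
    fix y :: real assume "y \<in> {0<..}"
    have "hh (max x y) \<le> hh y" by (rule hh_mono) simp
    hence "hh (max x y) * pd y \<le> hh y * pd y"
      by (rule mult_right_mono) (use pd_pos[of y] in simp)
    thus "hh (max x y) * pd y \<le> qd y" by (simp add: hh_pd)
  qed
  also have "\<dots> = 1" using qd_int(2)[of 0] by simp
  finally show ?thesis .
qed

lemma rh_nonneg: "0 < x \<Longrightarrow> 0 \<le> rh x" using al_le1 by (simp add: rh_def)
lemma rh_le: "0 \<le> x \<Longrightarrow> rh x \<le> 1 - exp (- (a2 - a1) * x)" using al_ge by (simp add: rh_def)
lemma rh_le1: "0 \<le> x \<Longrightarrow> rh x \<le> 1" using rh_le[of x] exp_gt_zero[of "- (a2 - a1) * x"] by linarith

lemma rh_le_Pi: "0 < x \<Longrightarrow> rh x \<le> (a2 / a1) * Pi x"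
proof -
  assume x: "0 < x"
  have "rh x \<le> 1 - exp (- a2 * x)"
    using hh_pos[of x] Pi_pos[OF x] by (simp add: rh_def al_def)
  also have "\<dots> = (LINT y:{0<..x}|lborel. qd y)" using qd_int_Ioc(2)[of 0 x] x by simp
  also have "\<dots> \<le> (LINT y:{0<..x}|lborel. (a2 / a1) * pd y)"
  proof (rule set_integral_mono)
    show "set_integrable lborel {0<..x} qd" using qd_int_Ioc(1)[of 0 x] x by simp
    show "set_integrable lborel {0<..x} (\<lambda>y. a2 / a1 * pd y)" using pd_int_Ioc(1)[of 0 x] x by simp
    fix y assume "y \<in> {0<..x}"
    hence "exp (- a2 * y) \<le> exp (- a1 * y)" using a12 by (simp add: mult_right_mono)
    thus "qd y \<le> a2 / a1 * pd y" using a1pos a2pos by (simp add: qd_def pd_def)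
  qed
  also have "\<dots> = (a2 / a1) * Pi x" using pd_int_Ioc(2)[of 0 x] x by (simp add: Pi_def)
  finally show ?thesis .
qed

lemma dom_pd0:
  assumes [measurable]: "g \<in> borel_measurable borel" and "\<And>y. 0 < y \<Longrightarrow> \<bar>g y\<bar> \<le> C * pd y"
    and "0 \<le> t"
  shows "set_integrable lborel {0<..} g" "set_integrable lborel {0<..t} g" "set_integrable lborel {t<..} g"
proof -
  show I: "set_integrable lborel {0<..} g" by (rule dom_pd) (use assms in auto)
  show "set_integrable lborel {0<..t} g" by (rule set_integrable_subset[OF I]) auto
  show "set_integrable lborel {t<..} g" by (rule set_integrable_subset[OF I]) (use assms in auto)
qed

lemma split_Ioc:
  fixes g :: "real \<Rightarrow> real"
  assumes "set_integrable lborel {c<..e} g" "c \<le> d" "d \<le> e"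
  shows "(LINT y:{c<..e}|lborel. g y) = (LINT y:{c<..d}|lborel. g y) + (LINT y:{d<..e}|lborel. g y)"
proof -
  have 1: "set_integrable lborel {c<..d} g" by (rule set_integrable_subset[OF assms(1)]) (use assms in auto)
  have 2: "set_integrable lborel {d<..e} g" by (rule set_integrable_subset[OF assms(1)]) (use assms in auto)
  have e: "{c<..e} = {c<..d} \<union> {d<..e}" using assms by auto
  have "(LINT y:{c<..d} \<union> {d<..e}|lborel. g y) = (LINT y:{c<..d}|lborel. g y) + (LINT y:{d<..e}|lborel. g y)"
    by (rule set_integral_Un[OF _ 1 2]) auto
  thus ?thesis by (simp only: e)
qed

lemma fubini_swap:
  fixes F :: "real \<Rightarrow> real \<Rightarrow> real" and g1 g2 :: "real \<Rightarrow> real"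
  assumes [measurable]: "case_prod F \<in> borel_measurable (lborel \<Otimes>\<^sub>M lborel)"
    and i1: "integrable lborel g1" and i2: "integrable lborel g2"
    and n1: "\<And>x. 0 \<le> g1 x" and n2: "\<And>y. 0 \<le> g2 y"
    and b: "\<And>x y. \<bar>F x y\<bar> \<le> g1 x * g2 y"
  shows "(\<integral>x. (\<integral>y. F x y \<partial>lborel) \<partial>lborel) = (\<integral>y. (\<integral>x. F x y \<partial>lborel) \<partial>lborel)"
proof -
  have [measurable]: "g1 \<in> borel_measurable borel" "g2 \<in> borel_measurable borel"
    using i1 i2 by (auto dest: borel_measurable_integrable)
  have iy: "integrable lborel (\<lambda>y. F x y)" for x
    by (rule Bochner_Integration.integrable_bound[where f="\<lambda>y. g1 x * g2 y"]) (use i2 b n1 n2 in auto)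
  have "integrable (lborel \<Otimes>\<^sub>M lborel) (case_prod F)"
  proof (rule lborel_pair.Fubini_integrable)
    show "integrable lborel (\<lambda>x. \<integral>y. norm (case_prod F (x, y)) \<partial>lborel)"
    proof (rule Bochner_Integration.integrable_bound[where f="\<lambda>x. g1 x * (\<integral>y. g2 y \<partial>lborel)"])
      show "integrable lborel (\<lambda>x. g1 x * (\<integral>y. g2 y \<partial>lborel))" using i1 by simp
      show "(\<lambda>x. \<integral>y. norm (case_prod F (x, y)) \<partial>lborel) \<in> borel_measurable lborel" by measurable
      show "AE x in lborel. norm (\<integral>y. norm (case_prod F (x, y)) \<partial>lborel) \<le> norm (g1 x * (\<integral>y. g2 y \<partial>lborel))"
      proof (intro AE_I2)
        fix x
        have "(\<integral>y. norm (F x y) \<partial>lborel) \<le> (\<integral>y. g1 x * g2 y \<partial>lborel)"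
          by (rule integral_mono) (use iy i2 b in auto)
        also have "\<dots> = g1 x * (\<integral>y. g2 y \<partial>lborel)" by simp
        finally have "(\<integral>y. norm (F x y) \<partial>lborel) \<le> g1 x * (\<integral>y. g2 y \<partial>lborel)" .
        moreover have "0 \<le> (\<integral>y. norm (F x y) \<partial>lborel)" by simp
        ultimately show "norm (\<integral>y. norm (case_prod F (x, y)) \<partial>lborel) \<le> norm (g1 x * (\<integral>y. g2 y \<partial>lborel))"
          by simp
      qed
    qed
    show "AE x in lborel. integrable lborel (\<lambda>y. case_prod F (x, y))" using iy by simp
  qed measurable
  thus ?thesis by (rule lborel_pair.Fubini_integral[symmetric])
qed

definition Kop :: "(real \<Rightarrow> real) \<Rightarrow> real \<Rightarrow> real" where
  "Kop u x = (LINT y:{0<..}|lborel. hh (max x y) * pd y * u y)"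
definition P :: "(real \<Rightarrow> real) \<Rightarrow> real \<Rightarrow> real" where
  "P u x = Kop u x + rh x * u x"
definition bnd :: "real \<Rightarrow> (real \<Rightarrow> real) \<Rightarrow> bool" where
  "bnd B u \<longleftrightarrow> u \<in> borel_measurable borel \<and> (\<forall>x>0. \<bar>u x\<bar> \<le> B)"
definition S :: "(real \<Rightarrow> real) \<Rightarrow> real \<Rightarrow> real" where
  "S u t = (LINT y:{0<..t}|lborel. pd y * u y)"
definition R :: "(real \<Rightarrow> real) \<Rightarrow> real \<Rightarrow> real" where
  "R u t = (LINT y:{t<..}|lborel. qd y * u y)"

lemma Kop_measurable[measurable]:
  assumes [measurable]: "u \<in> borel_measurable borel"
  shows "Kop u \<in> borel_measurable borel"
  unfolding Kop_def set_lebesgue_integral_def by measurable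

lemma P_measurable[measurable]:
  assumes [measurable]: "u \<in> borel_measurable borel"
  shows "P u \<in> borel_measurable borel"
  unfolding P_def by measurable

lemma bnd_B: "bnd B u \<Longrightarrow> 0 \<le> B"
  unfolding bnd_def by (metis abs_ge_zero order_trans zero_less_one)

lemma Kop_int:
  assumes "bnd B u" "0 < x" "0 \<le> t"
  shows "set_integrable lborel {0<..} (\<lambda>y. hh (max x y) * pd y * u y)"
    "set_integrable lborel {0<..t} (\<lambda>y. hh (max x y) * pd y * u y)"
    "set_integrable lborel {t<..} (\<lambda>y. hh (max x y) * pd y * u y)"
proof -
  have [measurable]: "u \<in> borel_measurable borel" using assms unfolding bnd_def by simp
  have b: "\<bar>hh (max x y) * pd y * u y\<bar> \<le> (a2 / a1 * B) * pd y" if "0 < y" for y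
  proof -
    have "\<bar>hh (max x y) * pd y * u y\<bar> = hh (max x y) * pd y * \<bar>u y\<bar>"
      by (simp add: abs_mult abs_of_pos[OF hh_pos] abs_of_pos[OF pd_pos])
    also have "\<dots> \<le> (a2 / a1) * pd y * B"
      using that assms hh_le[of "max x y"] pd_pos[of y] hh_pos[of "max x y"] ratio_pos
        mult_nonneg_nonneg[OF less_imp_le[OF ratio_pos] less_imp_le[OF pd_pos[of y]]] unfolding bnd_def
      by (intro mult_mono) (auto simp: less_imp_le)
    finally show ?thesis by (simp add: algebra_simps)
  qed
  note * = dom_pd0[of "\<lambda>y. hh (max x y) * pd y * u y", OF _ b \<open>0 \<le> t\<close>]
  show "set_integrable lborel {0<..} (\<lambda>y. hh (max x y) * pd y * u y)" by (rule *) measurable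
  show "set_integrable lborel {0<..t} (\<lambda>y. hh (max x y) * pd y * u y)" by (rule *) measurable
  show "set_integrable lborel {t<..} (\<lambda>y. hh (max x y) * pd y * u y)" by (rule *) measurable
qed

lemma Kop_abs:
  assumes "bnd B u" "0 < x"
  shows "\<bar>Kop u x\<bar> \<le> B * al x"
proof -
  have I: "set_integrable lborel {0<..} (\<lambda>y. hh (max x y) * pd y * u y)"
    using Kop_int[OF assms order_refl] by simp
  have J: "set_integrable lborel {0<..} (\<lambda>y. hh (max x y) * pd y * B)"
    using kint(1)[OF assms(2)] by simp
  have eq: "(LINT y:{0<..}|lborel. hh (max x y) * pd y * B) = B * al x"
    using kint(2)[OF assms(2)] by simp
  have p: "0 \<le> hh (max x y) * pd y" for y using hh_pos pd_pos by (simp add: less_imp_le)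
  have "Kop u x \<le> B * al x"
    unfolding Kop_def eq[symmetric]
    by (rule set_integral_mono[OF I J]) (use assms p in \<open>auto simp: bnd_def intro!: mult_left_mono\<close>)
  moreover have "- Kop u x \<le> B * al x"
  proof -
    have J': "set_integrable lborel {0<..} (\<lambda>y. hh (max x y) * pd y * (- B))"
      by (intro set_integrable_mult_left kint(1) assms(2))
    have eq': "(LINT y:{0<..}|lborel. hh (max x y) * pd y * (- B)) = - B * al x"
      by (simp only: set_integral_mult_left kint(2)[OF assms(2)]) simp
    have "(LINT y:{0<..}|lborel. hh (max x y) * pd y * (- B)) \<le> (LINT y:{0<..}|lborel. hh (max x y) * pd y * u y)"
    proof (rule set_integral_mono[OF J' I])
      fix y :: real assume "y \<in> {0<..}"
      hence "- B \<le> u y" using assms unfolding bnd_def by force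
      thus "hh (max x y) * pd y * (- B) \<le> hh (max x y) * pd y * u y"
        by (rule mult_left_mono) (rule p)
    qed
    thus ?thesis unfolding Kop_def eq' by simp
  qed
  ultimately show ?thesis by linarith
qed

lemma P_bnd: assumes "bnd B u" shows "bnd B (P u)"
proof -
  have [measurable]: "u \<in> borel_measurable borel" using assms unfolding bnd_def by simp
  have "\<bar>P u x\<bar> \<le> B" if x: "0 < x" for x
  proof -
    have "\<bar>P u x\<bar> \<le> \<bar>Kop u x\<bar> + rh x * \<bar>u x\<bar>"
      unfolding P_def using rh_nonneg[OF x] by (simp add: abs_mult abs_triangle_ineq[THEN order_trans])
    also have "\<dots> \<le> B * al x + rh x * B"
      using Kop_abs[OF assms x] assms x rh_nonneg[OF x] unfolding bnd_def
      by (intro add_mono mult_left_mono) auto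
    also have "\<dots> = B" by (simp add: rh_def algebra_simps)
    finally show ?thesis .
  qed
  thus ?thesis unfolding bnd_def by simp
qed

lemma Pn_bnd: "bnd B u \<Longrightarrow> bnd B ((P ^^ n) u)"
  by (induction n) (auto intro: P_bnd)

lemma bnd_int:
  assumes "bnd B u" "0 \<le> t" and [measurable]: "g \<in> borel_measurable borel"
    and "\<And>y. 0 < y \<Longrightarrow> \<bar>g y\<bar> \<le> C"
  shows "set_integrable lborel {0<..} (\<lambda>y. pd y * g y * u y)"
    "set_integrable lborel {0<..t} (\<lambda>y. pd y * g y * u y)"
    "set_integrable lborel {t<..} (\<lambda>y. pd y * g y * u y)"
proof -
  have [measurable]: "u \<in> borel_measurable borel" using assms unfolding bnd_def by simp
  have C: "0 \<le> C" using assms(4)[of 1] by simp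
  have b: "\<bar>pd y * g y * u y\<bar> \<le> (C * B) * pd y" if "0 < y" for y
  proof -
    have "\<bar>pd y * g y * u y\<bar> = pd y * (\<bar>g y\<bar> * \<bar>u y\<bar>)"
      by (simp add: abs_mult abs_of_pos[OF pd_pos])
    also have "\<dots> \<le> pd y * (C * B)"
      using that assms pd_pos[of y] C unfolding bnd_def
      by (intro mult_left_mono mult_mono) auto
    finally show ?thesis by (simp add: algebra_simps)
  qed
  note * = dom_pd0[of "\<lambda>y. pd y * g y * u y", OF _ b \<open>0 \<le> t\<close>]
  show "set_integrable lborel {0<..} (\<lambda>y. pd y * g y * u y)" by (rule *) measurable
  show "set_integrable lborel {0<..t} (\<lambda>y. pd y * g y * u y)" by (rule *) measurable
  show "set_integrable lborel {t<..} (\<lambda>y. pd y * g y * u y)" by (rule *) measurable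
qed

lemma Pu_split:
  assumes "bnd B u" "0 < t"
  shows "P u t = rh t * u t + hh t * S u t + R u t"
proof -
  note I = Kop_int[OF assms order_refl]
  have "Kop u t = (LINT y:{0<..t}|lborel. hh (max t y) * pd y * u y) + (LINT y:{t<..}|lborel. hh (max t y) * pd y * u y)"
    unfolding Kop_def by (rule split_Ioi(3)[OF I(1)]) (use assms in simp)
  also have "(LINT y:{0<..t}|lborel. hh (max t y) * pd y * u y) = (LINT y:{0<..t}|lborel. hh t * (pd y * u y))"
    by (rule set_lebesgue_integral_cong) auto
  also have "\<dots> = hh t * S u t" unfolding S_def by simp
  also have "(LINT y:{t<..}|lborel. hh (max t y) * pd y * u y) = R u t"
    unfolding R_def by (rule set_lebesgue_integral_cong) (auto simp: hh_pd)
  finally show ?thesis unfolding P_def by simp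
qed

lemma Kop_fubini:
  assumes bu: "bnd B u" and [measurable]: "A \<in> sets borel" and A0: "A \<subseteq> {0<..}"
  shows "(LINT x:A|lborel. pd x * Kop u x) =
    (\<integral>y. indicator {0<..} y * (pd y * u y * (LINT x:A|lborel. pd x * hh (max x y))) \<partial>lborel)"
proof -
  have [measurable]: "u \<in> borel_measurable borel" using bu unfolding bnd_def by simp
  have B0: "0 \<le> B" using bnd_B[OF bu] .
  define F where "F x y = indicator A x * pd x * (indicator {0<..} y * (hh (max x y) * pd y * u y))" for x y
  have lhs: "(LINT x:A|lborel. pd x * Kop u x) = (\<integral>x. (\<integral>y. F x y \<partial>lborel) \<partial>lborel)"
    unfolding set_lebesgue_integral_def Kop_def F_def by (simp add: mult.assoc)
  have Fe: "F x y = (indicator {0<..} y * (pd y * u y)) * (indicator A x * (pd x * hh (max x y)))" for x y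
    unfolding F_def by (simp add: algebra_simps)
  have rhs: "(\<integral>y. (\<integral>x. F x y \<partial>lborel) \<partial>lborel) =
    (\<integral>y. indicator {0<..} y * (pd y * u y * (LINT x:A|lborel. pd x * hh (max x y))) \<partial>lborel)"
    unfolding Fe set_lebesgue_integral_def by (simp only: integral_mult_right_zero real_scaleR_def) (simp add: mult.assoc)
  have sw: "(\<integral>x. (\<integral>y. F x y \<partial>lborel) \<partial>lborel) = (\<integral>y. (\<integral>x. F x y \<partial>lborel) \<partial>lborel)"
  proof (rule fubini_swap[of F "\<lambda>x. indicator {0<..} x * pd x" "\<lambda>y. (a2 / a1 * B) * (indicator {0<..} y * pd y)"])
    show "case_prod F \<in> borel_measurable (lborel \<Otimes>\<^sub>M lborel)" unfolding F_def by measurable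
    show "integrable lborel (\<lambda>x. indicator {0<..} x * pd x)"
      using pd_int(1)[of 0] unfolding set_integrable_def by simp
    show "integrable lborel (\<lambda>y. (a2 / a1 * B) * (indicator {0<..} y * pd y))"
      using pd_int(1)[of 0] unfolding set_integrable_def by simp
    show "0 \<le> indicator {0<..} x * pd x" for x using pd_pos[of x] by simp
    show "0 \<le> (a2 / a1 * B) * (indicator {0<..} y * pd y)" for y
      using pd_pos[of y] ratio_pos B0 by (intro mult_nonneg_nonneg) auto
    show "\<bar>F x y\<bar> \<le> indicator {0<..} x * pd x * ((a2 / a1 * B) * (indicator {0<..} y * pd y))" for x y
    proof (cases "x \<in> A \<and> 0 < y")
      case True
      hence x0: "0 < x" using A0 by auto
      have "\<bar>F x y\<bar> = pd x * (hh (max x y) * pd y * \<bar>u y\<bar>)"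
        using True unfolding F_def
        by (simp add: abs_mult abs_of_pos[OF hh_pos] abs_of_pos[OF pd_pos])
      also have "\<dots> \<le> pd x * ((a2 / a1) * pd y * B)"
        using True x0 bu hh_le[of "max x y"] pd_pos[of y] pd_pos[of x] hh_pos[of "max x y"] ratio_pos
          mult_nonneg_nonneg[OF less_imp_le[OF ratio_pos] less_imp_le[OF pd_pos[of y]]] unfolding bnd_def
        by (intro mult_left_mono mult_mono) (auto simp: less_imp_le)
      finally show ?thesis using True x0 by (simp add: algebra_simps)
    next
      case False
      hence "F x y = 0" unfolding F_def by auto
      thus ?thesis using pd_pos[of x] pd_pos[of y] ratio_pos B0
        by (simp only: abs_zero) (intro mult_nonneg_nonneg; simp)
    qed
  qed
  show ?thesis using lhs sw rhs by simp
qed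

lemma W_Ioc:
  assumes "0 < t" "0 < y"
  shows "(LINT x:{0<..t}|lborel. pd x * hh (max x y)) = (if y \<le> t then al y - exp (- a2 * t) else hh y * Pi t)"
proof (cases "y \<le> t")
  case True
  have I: "set_integrable lborel {0<..t} (\<lambda>x. pd x * hh (max x y))"
  proof (rule dom_pd0(2)[where C="a2/a1"])
    fix x :: real assume "0 < x"
    hence "hh (max x y) \<le> a2 / a1" using hh_le[of "max x y"] by simp
    hence "pd x * hh (max x y) \<le> pd x * (a2 / a1)"
      by (rule mult_left_mono) (use pd_pos[of x] in simp)
    thus "\<bar>pd x * hh (max x y)\<bar> \<le> a2 / a1 * pd x"
      by (simp add: abs_mult abs_of_pos[OF pd_pos] abs_of_pos[OF hh_pos] algebra_simps)
  qed (use assms in auto)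
  have "(LINT x:{0<..t}|lborel. pd x * hh (max x y)) =
      (LINT x:{0<..y}|lborel. pd x * hh (max x y)) + (LINT x:{y<..t}|lborel. pd x * hh (max x y))"
    by (rule split_Ioc[OF I]) (use assms True in auto)
  also have "(LINT x:{0<..y}|lborel. pd x * hh (max x y)) = (LINT x:{0<..y}|lborel. pd x * hh y)"
    by (rule set_lebesgue_integral_cong) auto
  also have "\<dots> = hh y * Pi y" using pd_int_Ioc(2)[of 0 y] assms by (simp add: Pi_def)
  also have "(LINT x:{y<..t}|lborel. pd x * hh (max x y)) = (LINT x:{y<..t}|lborel. qd x)"
    by (rule set_lebesgue_integral_cong) (auto simp: hh_pd[symmetric] mult.commute)
  also have "\<dots> = exp (- a2 * y) - exp (- a2 * t)" using qd_int_Ioc(2)[of y t] True by simp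
  finally show ?thesis using True by (simp add: al_def)
next
  case False
  have "(LINT x:{0<..t}|lborel. pd x * hh (max x y)) = (LINT x:{0<..t}|lborel. pd x * hh y)"
    by (rule set_lebesgue_integral_cong) (use False in auto)
  also have "\<dots> = hh y * Pi t" using pd_int_Ioc(2)[of 0 t] assms by (simp add: Pi_def)
  finally show ?thesis using False by simp
qed

lemma W_Ioi:
  assumes "0 < y"
  shows "(LINT x:{0<..}|lborel. pd x * hh (max x y)) = al y"
proof -
  have "(LINT x:{0<..}|lborel. pd x * hh (max x y)) = (LINT x:{0<..}|lborel. hh (max y x) * pd x)"
    by (rule set_lebesgue_integral_cong) (auto simp: max.commute mult.commute)
  thus ?thesis using kint(2)[OF assms] by simp
qed

lemma al_pos: "0 \<le> x \<Longrightarrow> 0 < al x"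
  using al_ge[of x] exp_gt_zero[of "- (a2 - a1) * x"] by linarith

lemma rh_abs: "0 < y \<Longrightarrow> \<bar>rh y\<bar> \<le> 1"
  using rh_nonneg[of y] rh_le1[of y] by simp

lemma pdK_int:
  assumes bu: "bnd B u" and "0 \<le> t"
  shows "set_integrable lborel {0<..t} (\<lambda>x. pd x * Kop u x)" "set_integrable lborel {0<..} (\<lambda>x. pd x * Kop u x)"
proof -
  have [measurable]: "u \<in> borel_measurable borel" using bu unfolding bnd_def by simp
  have b: "\<bar>pd x * Kop u x\<bar> \<le> B * pd x" if "0 < x" for x
  proof -
    have "\<bar>Kop u x\<bar> \<le> B" using Kop_abs[OF bu that] al_le1[OF that] bnd_B[OF bu]
      by (meson mult_left_le order_trans)
    thus ?thesis using pd_pos[of x] by (simp add: abs_mult abs_of_pos[OF pd_pos] mult_left_mono mult.commute)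
  qed
  show "set_integrable lborel {0<..t} (\<lambda>x. pd x * Kop u x)" by (rule dom_pd0(2)[OF _ b]) (use assms in auto)
  show "set_integrable lborel {0<..} (\<lambda>x. pd x * Kop u x)" by (rule dom_pd0(1)[OF _ b]) (use assms in auto)
qed

lemma B1:
  assumes bu: "bnd B u" and t: "0 < t"
  shows "(LINT x:{0<..t}|lborel. pd x * P u x) = (1 - exp (- a2 * t)) * S u t + Pi t * R u t"
proof -
  have [measurable]: "u \<in> borel_measurable borel" using bu unfolding bnd_def by simp
  define e where "e = exp (- a2 * t)"
  have e01: "0 < e" "e \<le> 1" using t a2pos unfolding e_def by auto
  define Wf where "Wf y = (if y \<le> t then al y - e else hh y * Pi t)" for y
  have [measurable]: "Wf \<in> borel_measurable borel" unfolding Wf_def by measurable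
  have ale: "\<bar>al y - e\<bar> \<le> 1" if "0 < y" for y
    using al_pos[of y] al_le1[OF that] e01 that by auto
  have Wf_b: "\<bar>Wf y\<bar> \<le> 1 + a2 / a1" if "0 < y" for y
  proof (cases "y \<le> t")
    case True thus ?thesis using ale[OF that] ratio_pos unfolding Wf_def by simp
  next
    case False
    have "hh y * Pi t \<le> a2 / a1 * 1"
      using hh_le[of y] Pi_le1[of t] Pi_pos[OF t] hh_pos[of y] that ratio_pos
      by (intro mult_mono) auto
    moreover have "0 \<le> hh y * Pi t" using hh_pos[of y] Pi_pos[OF t] by simp
    ultimately show ?thesis using False unfolding Wf_def by simp
  qed
  note iK = pdK_int(1)[OF bu less_imp_le[OF t]]
  have iR: "set_integrable lborel {0<..t} (\<lambda>x. pd x * rh x * u x)"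
    by (rule bnd_int(2)[OF bu less_imp_le[OF t] _ rh_abs]) measurable
  have iW: "set_integrable lborel {0<..} (\<lambda>y. pd y * Wf y * u y)"
    by (rule bnd_int(1)[OF bu less_imp_le[OF t] _ Wf_b]) measurable
  have iA: "set_integrable lborel {0<..t} (\<lambda>y. pd y * (al y - e) * u y)"
    by (rule bnd_int(2)[OF bu less_imp_le[OF t] _ ale]) measurable
  have "(LINT x:{0<..t}|lborel. pd x * P u x) = (LINT x:{0<..t}|lborel. pd x * Kop u x + pd x * rh x * u x)"
    by (rule set_lebesgue_integral_cong) (auto simp: P_def algebra_simps)
  also have "\<dots> = (LINT x:{0<..t}|lborel. pd x * Kop u x) + (LINT x:{0<..t}|lborel. pd x * rh x * u x)"
    by (rule set_integral_add(2)[OF iK iR])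
  also have "(LINT x:{0<..t}|lborel. pd x * Kop u x) = (LINT y:{0<..}|lborel. pd y * Wf y * u y)"
  proof -
    have "(LINT x:{0<..t}|lborel. pd x * Kop u x) =
      (\<integral>y. indicator {0<..} y * (pd y * u y * (LINT x:{0<..t}|lborel. pd x * hh (max x y))) \<partial>lborel)"
      by (rule Kop_fubini[OF bu]) auto
    also have "\<dots> = (LINT y:{0<..}|lborel. pd y * Wf y * u y)"
      unfolding set_lebesgue_integral_def[of _ "{0<..}"]
    proof (rule Bochner_Integration.integral_cong[OF refl])
      fix y :: real
      show "indicator {0<..} y * (pd y * u y * (LINT x:{0<..t}|lborel. pd x * hh (max x y))) =
        indicator {0<..} y *\<^sub>R (pd y * Wf y * u y)"
      proof (cases "0 < y")
        case True thus ?thesis using W_Ioc[OF t True] unfolding Wf_def e_def by simp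
      qed simp
    qed
    finally show ?thesis .
  qed
  also have "(LINT y:{0<..}|lborel. pd y * Wf y * u y) =
    (LINT y:{0<..t}|lborel. pd y * Wf y * u y) + (LINT y:{t<..}|lborel. pd y * Wf y * u y)"
    by (rule split_Ioi(3)[OF iW]) (use t in simp)
  also have "(LINT y:{0<..t}|lborel. pd y * Wf y * u y) = (LINT y:{0<..t}|lborel. pd y * (al y - e) * u y)"
    by (rule set_lebesgue_integral_cong) (auto simp: Wf_def)
  also have "(LINT y:{t<..}|lborel. pd y * Wf y * u y) = (LINT y:{t<..}|lborel. Pi t * (qd y * u y))"
    by (rule set_lebesgue_integral_cong) (auto simp: Wf_def hh_pd[symmetric] algebra_simps)
  also have "\<dots> = Pi t * R u t" unfolding R_def by simp
  also have "(LINT y:{0<..t}|lborel. pd y * (al y - e) * u y) + Pi t * R u t + (LINT x:{0<..t}|lborel. pd x * rh x * u x)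
      = ((LINT y:{0<..t}|lborel. pd y * (al y - e) * u y) + (LINT x:{0<..t}|lborel. pd x * rh x * u x)) + Pi t * R u t"
    by simp
  also have "(LINT y:{0<..t}|lborel. pd y * (al y - e) * u y) + (LINT x:{0<..t}|lborel. pd x * rh x * u x)
      = (LINT y:{0<..t}|lborel. pd y * (al y - e) * u y + pd y * rh y * u y)"
    by (rule set_integral_add(2)[OF iA iR, symmetric])
  also have "\<dots> = (LINT y:{0<..t}|lborel. (1 - e) * (pd y * u y))"
    by (rule set_lebesgue_integral_cong) (auto simp: rh_def algebra_simps)
  also have "\<dots> = (1 - e) * S u t" unfolding S_def by simp
  finally show ?thesis unfolding e_def .
qed

lemma Inv:
  assumes bu: "bnd B u"
  shows "(LINT x:{0<..}|lborel. pd x * P u x) = (LINT x:{0<..}|lborel. pd x * u x)"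
proof -
  have [measurable]: "u \<in> borel_measurable borel" using bu unfolding bnd_def by simp
  note iK = pdK_int(2)[OF bu order_refl]
  have iR: "set_integrable lborel {0<..} (\<lambda>x. pd x * rh x * u x)"
    by (rule bnd_int(1)[OF bu order_refl _ rh_abs]) measurable
  have al_abs: "\<bar>al y\<bar> \<le> 1" if "0 < y" for y using al_pos[of y] al_le1[OF that] that by simp
  have iA: "set_integrable lborel {0<..} (\<lambda>x. pd x * al x * u x)"
    by (rule bnd_int(1)[OF bu order_refl _ al_abs]) measurable
  have "(LINT x:{0<..}|lborel. pd x * P u x) = (LINT x:{0<..}|lborel. pd x * Kop u x + pd x * rh x * u x)"
    by (rule set_lebesgue_integral_cong) (auto simp: P_def algebra_simps)
  also have "\<dots> = (LINT x:{0<..}|lborel. pd x * Kop u x) + (LINT x:{0<..}|lborel. pd x * rh x * u x)"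
    by (rule set_integral_add(2)[OF iK iR])
  also have "(LINT x:{0<..}|lborel. pd x * Kop u x) = (LINT y:{0<..}|lborel. pd y * al y * u y)"
  proof -
    have "(LINT x:{0<..}|lborel. pd x * Kop u x) =
      (\<integral>y. indicator {0<..} y * (pd y * u y * (LINT x:{0<..}|lborel. pd x * hh (max x y))) \<partial>lborel)"
      by (rule Kop_fubini[OF bu]) auto
    also have "\<dots> = (LINT y:{0<..}|lborel. pd y * al y * u y)"
      unfolding set_lebesgue_integral_def[of _ "{0<..}" "\<lambda>y. pd y * al y * u y"]
    proof (rule Bochner_Integration.integral_cong[OF refl])
      fix y :: real
      show "indicator {0<..} y * (pd y * u y * (LINT x:{0<..}|lborel. pd x * hh (max x y))) =
        indicator {0<..} y *\<^sub>R (pd y * al y * u y)"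
      proof (cases "0 < y")
        case True thus ?thesis using W_Ioi[OF True] by simp
      qed simp
    qed
    finally show ?thesis .
  qed
  also have "(LINT y:{0<..}|lborel. pd y * al y * u y) + (LINT x:{0<..}|lborel. pd x * rh x * u x)
      = (LINT y:{0<..}|lborel. pd y * al y * u y + pd y * rh y * u y)"
    by (rule set_integral_add(2)[OF iA iR, symmetric])
  also have "\<dots> = (LINT y:{0<..}|lborel. pd y * u y)"
    by (rule set_lebesgue_integral_cong) (auto simp: rh_def algebra_simps)
  finally show ?thesis .
qed

definition T :: "(real \<Rightarrow> real) \<Rightarrow> real \<Rightarrow> real" where
  "T u t = u t - S u t / Pi t"

lemma TP:
  assumes bu: "bnd B u" and t: "0 < t"
  shows "T (P u) t = rh t * T u t"
proof -
  have SP: "S (P u) t = (1 - exp (- a2 * t)) * S u t + Pi t * R u t"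
    by (simp only: S_def[of "P u" t] B1[OF bu t])
  have Pp: "Pi t \<noteq> 0" using Pi_pos[OF t] by simp
  show ?thesis
    unfolding T_def SP Pu_split[OF bu t] using Pp
    by (simp add: rh_def al_def Pi_def field_simps)
qed

lemma TPn:
  assumes bu: "bnd B u" and t: "0 < t"
  shows "T ((P ^^ n) u) t = rh t ^ n * T u t"
proof (induction n)
  case 0 thus ?case by simp
next
  case (Suc n)
  have "T ((P ^^ Suc n) u) t = T (P ((P ^^ n) u)) t" by simp
  also have "\<dots> = rh t * T ((P ^^ n) u) t" by (rule TP[OF Pn_bnd[OF bu] t])
  finally show ?case using Suc by simp
qed

lemma Pi_lim: "(Pi \<longlongrightarrow> 1) at_top"
proof -
  have "filterlim (\<lambda>x. a1 * x) at_top at_top"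
    by (rule filterlim_tendsto_pos_mult_at_top[OF tendsto_const a1pos filterlim_ident])
  hence "filterlim (\<lambda>x. - a1 * x) at_bot at_top" by (simp add: filterlim_uminus_at_bot)
  hence "((\<lambda>x. exp (- a1 * x)) \<longlongrightarrow> 0) at_top" by (rule filterlim_compose[OF exp_at_bot])
  hence "((\<lambda>x. 1 - exp (- a1 * x)) \<longlongrightarrow> 1 - 0) at_top" by (intro tendsto_intros)
  thus ?thesis unfolding Pi_def by simp
qed

lemma int_pdPi2:
  assumes c: "0 < c"
  shows "set_integrable lborel {c<..} (\<lambda>s. pd s / Pi s ^ 2)"
    "(LINT s:{c<..}|lborel. pd s / Pi s ^ 2) = 1 / Pi c - 1"
proof -
  have d: "DERIV (\<lambda>s. - 1 / Pi s) s :> pd s / Pi s ^ 2" if "c < s" for s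
  proof -
    have "0 < Pi s" using Pi_pos[of s] that c by simp
    thus ?thesis unfolding Pi_def pd_def
      by (auto intro!: derivative_eq_intros simp: field_simps power2_eq_square)
  qed
  have ct: "isCont (\<lambda>s. pd s / Pi s ^ 2) s" if "c < s" for s
  proof -
    have "0 < Pi s" using Pi_pos[of s] that c by simp
    thus ?thesis unfolding Pi_def pd_def by (auto intro!: continuous_intros)
  qed
  have nn: "0 \<le> pd s / Pi s ^ 2" for s using pd_pos[of s] by simp
  have l1: "((\<lambda>s. - 1 / Pi s) \<longlongrightarrow> - 1 / Pi c) (at_right c)"
    unfolding Pi_def using Pi_pos[OF c] unfolding Pi_def by (intro tendsto_intros) auto
  have l2: "((\<lambda>s. - 1 / Pi s) \<longlongrightarrow> - 1 / 1) at_top"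
    by (intro tendsto_intros Pi_lim) simp
  note * = FTC_Ioi[OF d ct nn l1 l2]
  show "set_integrable lborel {c<..} (\<lambda>s. pd s / Pi s ^ 2)" by (rule *)
  show "(LINT s:{c<..}|lborel. pd s / Pi s ^ 2) = 1 / Pi c - 1" using *(2) by simp
qed

lemma pdu_int:
  assumes "bnd B u" "0 \<le> t"
  shows "set_integrable lborel {0<..} (\<lambda>y. pd y * u y)"
    "set_integrable lborel {0<..t} (\<lambda>y. pd y * u y)"
    "set_integrable lborel {t<..} (\<lambda>y. pd y * u y)"
  using bnd_int[OF assms, of "\<lambda>_. 1" 1] by auto

lemma bnd_int_Ioi:
  assumes "bnd B u" "0 \<le> t" and [measurable]: "g \<in> borel_measurable borel"
    and gb: "\<And>y. t < y \<Longrightarrow> \<bar>g y\<bar> \<le> C"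
  shows "set_integrable lborel {t<..} (\<lambda>y. pd y * g y * u y)"
proof (rule dom_pd[where C="C * B"])
  have [measurable]: "u \<in> borel_measurable borel" using assms unfolding bnd_def by simp
  show "(\<lambda>y. pd y * g y * u y) \<in> borel_measurable borel" by measurable
  fix y :: real assume y: "t < y"
  have C: "0 \<le> C" using gb[OF y] by simp
  have "\<bar>pd y * g y * u y\<bar> = pd y * (\<bar>g y\<bar> * \<bar>u y\<bar>)"
    by (simp add: abs_mult abs_of_pos[OF pd_pos])
  also have "\<dots> \<le> pd y * (C * B)"
    using y assms pd_pos[of y] C gb[OF y] unfolding bnd_def
    by (intro mult_left_mono mult_mono) auto
  finally show "\<bar>pd y * g y * u y\<bar> \<le> C * B * pd y" by (simp add: algebra_simps)
qed

lemma Pi_mono: "x \<le> y \<Longrightarrow> Pi x \<le> Pi y"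
  unfolding Pi_def using a1pos by (simp add: mult_left_mono)

lemma S_measurable[measurable]:
  assumes [measurable]: "u \<in> borel_measurable borel"
  shows "S u \<in> borel_measurable borel"
proof -
  have e: "S u = (\<lambda>s. \<integral>y. (if 0 < y \<and> y \<le> s then pd y * u y else 0) \<partial>lborel)"
    unfolding S_def set_lebesgue_integral_def by (intro ext Bochner_Integration.integral_cong) (auto split: split_indicator)
  show ?thesis unfolding e by measurable
qed

lemma S_bound:
  assumes bu: "bnd B u" and s: "0 < s"
  shows "\<bar>S u s\<bar> \<le> B * Pi s"
proof -
  note I = pdu_int(2)[OF bu less_imp_le[OF s]]
  have J: "set_integrable lborel {0<..s} (\<lambda>y. B * pd y)" using pd_int_Ioc(1)[of 0 s] s by simp
  have J': "set_integrable lborel {0<..s} (\<lambda>y. - B * pd y)"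
    by (intro set_integrable_mult_right) (use pd_int_Ioc(1)[of 0 s] s in simp)
  have eq: "(LINT y:{0<..s}|lborel. B * pd y) = B * Pi s" using pd_int_Ioc(2)[of 0 s] s by (simp add: Pi_def)
  have eq': "(LINT y:{0<..s}|lborel. - B * pd y) = - B * Pi s"
    by (simp only: set_integral_mult_right pd_int_Ioc(2)[of 0 s] less_imp_le[OF s]) (simp add: Pi_def)
  have "S u s \<le> B * Pi s" unfolding S_def eq[symmetric]
  proof (rule set_integral_mono[OF I J])
    fix y :: real assume "y \<in> {0<..s}"
    hence "u y \<le> B" using bu unfolding bnd_def by force
    thus "pd y * u y \<le> B * pd y" using pd_pos[of y] by (simp add: mult.commute mult_left_mono)
  qed
  moreover have "- B * Pi s \<le> S u s" unfolding S_def eq'[symmetric]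
  proof (rule set_integral_mono[OF J' I])
    fix y :: real assume "y \<in> {0<..s}"
    hence "- B \<le> u y" using bu unfolding bnd_def by force
    hence "- B * pd y \<le> u y * pd y" by (rule mult_right_mono) (use pd_pos[of y] in simp)
    thus "- B * pd y \<le> pd y * u y" by (simp add: mult.commute)
  qed
  ultimately show ?thesis by simp
qed

lemma V_int:
  assumes t: "0 < t" and r: "0 < r"
  shows "(\<integral>s. (if t < s \<and> r \<le> s then pd s / Pi s ^ 2 else 0) \<partial>lborel) = 1 / Pi (max r t) - 1"
proof (cases "r \<le> t")
  case True
  have "(\<integral>s. (if t < s \<and> r \<le> s then pd s / Pi s ^ 2 else 0) \<partial>lborel) = (LINT s:{t<..}|lborel. pd s / Pi s ^ 2)"
    unfolding set_lebesgue_integral_def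
    by (rule Bochner_Integration.integral_cong) (use True in \<open>auto split: split_indicator\<close>)
  also have "\<dots> = 1 / Pi t - 1" by (rule int_pdPi2(2)[OF t])
  finally show ?thesis using True by (simp add: max_def)
next
  case False
  have "(\<integral>s. (if t < s \<and> r \<le> s then pd s / Pi s ^ 2 else 0) \<partial>lborel) = (LINT s:{r..}|lborel. pd s / Pi s ^ 2)"
    unfolding set_lebesgue_integral_def
    by (rule Bochner_Integration.integral_cong) (use False in \<open>auto split: split_indicator\<close>)
  also have "\<dots> = (LINT s:{r<..}|lborel. pd s / Pi s ^ 2)"
    by (rule set_integral_discrete_difference[where X="{r}"]) auto
  also have "\<dots> = 1 / Pi r - 1" by (rule int_pdPi2(2)[OF r])
  finally show ?thesis using False by (simp add: max_def)
qed

lemma fub_inv: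
  assumes bu: "bnd B u" and t: "0 < t"
  shows "(LINT s:{t<..}|lborel. S u s * pd s / Pi s ^ 2) =
    S u t / Pi t + (LINT s:{t<..}|lborel. pd s * (1 / Pi s) * u s) - (LINT x:{0<..}|lborel. pd x * u x)"
proof -
  have [measurable]: "u \<in> borel_measurable borel" using bu unfolding bnd_def by simp
  have B0: "0 \<le> B" using bnd_B[OF bu] .
  have Pt: "0 < Pi t" using Pi_pos[OF t] .
  define F where "F s r = (if t < s \<and> 0 < r \<and> r \<le> s then pd s / Pi s ^ 2 * (pd r * u r) else 0)" for s r
  have lhs: "(LINT s:{t<..}|lborel. S u s * pd s / Pi s ^ 2) = (\<integral>s. (\<integral>r. F s r \<partial>lborel) \<partial>lborel)"
    unfolding set_lebesgue_integral_def[of _ "{t<..}"]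
  proof (rule Bochner_Integration.integral_cong[OF refl])
    fix s :: real
    have "(\<integral>r. F s r \<partial>lborel) = (\<integral>r. (indicator {t<..} s * (pd s / Pi s ^ 2)) * (indicator {0<..s} r * (pd r * u r)) \<partial>lborel)"
      by (rule Bochner_Integration.integral_cong) (auto simp: F_def split: split_indicator)
    also have "\<dots> = (indicator {t<..} s * (pd s / Pi s ^ 2)) * S u s"
      unfolding S_def set_lebesgue_integral_def by simp
    finally show "indicator {t<..} s *\<^sub>R (S u s * pd s / Pi s ^ 2) = (\<integral>r. F s r \<partial>lborel)"
      by simp
  qed
  have sw: "(\<integral>s. (\<integral>r. F s r \<partial>lborel) \<partial>lborel) = (\<integral>r. (\<integral>s. F s r \<partial>lborel) \<partial>lborel)"
  proof (rule fubini_swap[of F "\<lambda>s. (1 / Pi t ^ 2) * (indicator {0<..} s * pd s)" "\<lambda>r. B * (indicator {0<..} r * pd r)"])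
    show "case_prod F \<in> borel_measurable (lborel \<Otimes>\<^sub>M lborel)" unfolding F_def by measurable
    show "integrable lborel (\<lambda>s. (1 / Pi t ^ 2) * (indicator {0<..} s * pd s))"
      using pd_int(1)[of 0] unfolding set_integrable_def by simp
    show "integrable lborel (\<lambda>r. B * (indicator {0<..} r * pd r))"
      using pd_int(1)[of 0] unfolding set_integrable_def by simp
    show "0 \<le> (1 / Pi t ^ 2) * (indicator {0<..} s * pd s)" for s
      using pd_pos[of s] Pt by simp
    show "0 \<le> B * (indicator {0<..} r * pd r)" for r
      using pd_pos[of r] B0 by simp
    show "\<bar>F s r\<bar> \<le> (1 / Pi t ^ 2) * (indicator {0<..} s * pd s) * (B * (indicator {0<..} r * pd r))" for s r
    proof (cases "t < s \<and> 0 < r \<and> r \<le> s")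
      case True
      have s0: "0 < s" using True t by simp
      have Ps: "Pi t \<le> Pi s" using Pi_mono True by simp
      have "pd s / Pi s ^ 2 \<le> pd s / Pi t ^ 2"
        using Ps Pt pd_pos[of s] by (intro divide_left_mono power_mono mult_pos_pos) auto
      moreover have "\<bar>u r\<bar> \<le> B" using bu True unfolding bnd_def by simp
      ultimately have "pd s / Pi s ^ 2 * (pd r * \<bar>u r\<bar>) \<le> pd s / Pi t ^ 2 * (pd r * B)"
        using pd_pos[of r] pd_pos[of s] Pt by (intro mult_mono mult_left_mono) auto
      thus ?thesis using True s0 unfolding F_def
        by (simp add: abs_mult abs_of_pos[OF pd_pos] algebra_simps)
    next
      case False
      thus ?thesis unfolding F_def using pd_pos[of r] pd_pos[of s] B0 Pt
        by (simp only: if_False abs_zero) (intro mult_nonneg_nonneg; simp)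
    qed
  qed
  define g where "g r = 1 / Pi (max r t) - 1" for r
  have [measurable]: "g \<in> borel_measurable borel" unfolding g_def by measurable
  have gb: "\<bar>g r\<bar> \<le> 1 / Pi t" if "0 < r" for r
  proof -
    have P1: "0 < Pi (max r t)" "Pi (max r t) \<le> 1" using Pi_pos[of "max r t"] t Pi_le1 by auto
    have "Pi t \<le> Pi (max r t)" by (rule Pi_mono) simp
    hence "1 / Pi (max r t) \<le> 1 / Pi t" using Pt by (intro divide_left_mono) auto
    moreover have "1 \<le> 1 / Pi (max r t)" using P1 by simp
    ultimately show ?thesis unfolding g_def by simp
  qed
  have rhs: "(\<integral>r. (\<integral>s. F s r \<partial>lborel) \<partial>lborel) = (LINT r:{0<..}|lborel. pd r * g r * u r)"
    unfolding set_lebesgue_integral_def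
  proof (rule Bochner_Integration.integral_cong[OF refl])
    fix r :: real
    show "(\<integral>s. F s r \<partial>lborel) = indicator {0<..} r *\<^sub>R (pd r * g r * u r)"
    proof (cases "0 < r")
      case True
      have "(\<integral>s. F s r \<partial>lborel) = (\<integral>s. (pd r * u r) * (if t < s \<and> r \<le> s then pd s / Pi s ^ 2 else 0) \<partial>lborel)"
        by (rule Bochner_Integration.integral_cong) (use True in \<open>auto simp: F_def\<close>)
      also have "\<dots> = (pd r * u r) * g r" using V_int[OF t True] unfolding g_def by simp
      finally show ?thesis using True by simp
    next
      case False
      thus ?thesis by (simp add: F_def)
    qed
  qed
  have iG: "set_integrable lborel {0<..} (\<lambda>r. pd r * g r * u r)"
    by (rule bnd_int(1)[OF bu order_refl _ gb]) measurable
  have iP: "set_integrable lborel {t<..} (\<lambda>s. pd s * (1 / Pi s) * u s)"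
  proof (rule bnd_int_Ioi[OF bu less_imp_le[OF t]])
    fix y :: real assume "t < y"
    hence "Pi t \<le> Pi y" by (intro Pi_mono) simp
    thus "\<bar>1 / Pi y\<bar> \<le> 1 / Pi t" using Pt by (simp add: divide_left_mono)
  qed measurable
  note i0 = pdu_int[OF bu less_imp_le[OF t]]
  have "(LINT r:{0<..}|lborel. pd r * g r * u r) =
    (LINT r:{0<..t}|lborel. pd r * g r * u r) + (LINT r:{t<..}|lborel. pd r * g r * u r)"
    by (rule split_Ioi(3)[OF iG]) (use t in simp)
  also have "(LINT r:{0<..t}|lborel. pd r * g r * u r) = (LINT r:{0<..t}|lborel. (1 / Pi t - 1) * (pd r * u r))"
    by (rule set_lebesgue_integral_cong) (auto simp: g_def max_def)
  also have "\<dots> = (1 / Pi t - 1) * S u t" unfolding S_def by simp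
  also have "(LINT r:{t<..}|lborel. pd r * g r * u r) = (LINT r:{t<..}|lborel. pd r * (1 / Pi r) * u r - pd r * u r)"
    by (rule set_lebesgue_integral_cong) (auto simp: g_def max_def algebra_simps)
  also have "\<dots> = (LINT r:{t<..}|lborel. pd r * (1 / Pi r) * u r) - (LINT r:{t<..}|lborel. pd r * u r)"
    by (rule set_integral_diff(2)[OF iP i0(3)])
  also have "(LINT x:{0<..}|lborel. pd x * u x) = S u t + (LINT r:{t<..}|lborel. pd r * u r)"
    unfolding S_def by (rule split_Ioi(3)[OF i0(1)]) (use t in simp)
  ultimately show ?thesis using lhs sw rhs Pt by (simp add: field_simps)
qed

lemma inv_formula:
  assumes bu: "bnd B u" and m0: "(LINT x:{0<..}|lborel. pd x * u x) = 0" and t: "0 < t"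
  shows "u t = T u t - (LINT s:{t<..}|lborel. T u s * pd s / Pi s)"
proof -
  have [measurable]: "u \<in> borel_measurable borel" using bu unfolding bnd_def by simp
  have B0: "0 \<le> B" using bnd_B[OF bu] .
  have Pt: "0 < Pi t" using Pi_pos[OF t] .
  have iP: "set_integrable lborel {t<..} (\<lambda>s. pd s * (1 / Pi s) * u s)"
  proof (rule bnd_int_Ioi[OF bu less_imp_le[OF t]])
    fix y :: real assume "t < y"
    hence "Pi t \<le> Pi y" by (intro Pi_mono) simp
    thus "\<bar>1 / Pi y\<bar> \<le> 1 / Pi t" using Pt by (simp add: divide_left_mono)
  qed measurable
  have iH: "set_integrable lborel {t<..} (\<lambda>s. S u s * pd s / Pi s ^ 2)"
  proof (rule dom_pd[where C="B / Pi t"])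
    show "(\<lambda>s. S u s * pd s / Pi s ^ 2) \<in> borel_measurable borel" by measurable
    fix s :: real assume s: "t < s"
    have s0: "0 < s" using s t by simp
    have Ps: "Pi t \<le> Pi s" using Pi_mono s by simp
    have Ps0: "0 < Pi s" using Pi_pos[OF s0] .
    have "\<bar>S u s * pd s / Pi s ^ 2\<bar> = \<bar>S u s\<bar> * pd s / Pi s ^ 2"
      by (simp add: abs_mult abs_of_pos[OF pd_pos])
    also have "\<dots> \<le> B * Pi s * pd s / Pi s ^ 2"
      using S_bound[OF bu s0] pd_pos[of s] Ps0
      by (intro divide_right_mono mult_right_mono) auto
    also have "\<dots> = B * pd s / Pi s" using Ps0 by (simp add: power2_eq_square)
    also have "\<dots> \<le> B * pd s / Pi t"
      using Ps Pt B0 pd_pos[of s] by (intro divide_left_mono) auto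
    finally show "\<bar>S u s * pd s / Pi s ^ 2\<bar> \<le> B / Pi t * pd s" by simp
  qed
  have "(LINT s:{t<..}|lborel. T u s * pd s / Pi s) =
    (LINT s:{t<..}|lborel. pd s * (1 / Pi s) * u s - S u s * pd s / Pi s ^ 2)"
  proof (rule set_lebesgue_integral_cong)
    show "\<forall>s. s \<in> {t<..} \<longrightarrow> T u s * pd s / Pi s = pd s * (1 / Pi s) * u s - S u s * pd s / Pi s ^ 2"
    proof (intro allI impI)
      fix s assume "s \<in> {t<..}"
      hence "0 < Pi s" using Pi_pos[of s] t by simp
      thus "T u s * pd s / Pi s = pd s * (1 / Pi s) * u s - S u s * pd s / Pi s ^ 2"
        unfolding T_def by (simp add: field_simps power2_eq_square)
    qed
  qed simp
  also have "\<dots> = (LINT s:{t<..}|lborel. pd s * (1 / Pi s) * u s) - (LINT s:{t<..}|lborel. S u s * pd s / Pi s ^ 2)"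
    by (rule set_integral_diff(2)[OF iP iH])
  also have "\<dots> = - S u t / Pi t" unfolding fub_inv[OF bu t] m0 by simp
  finally show ?thesis unfolding T_def by simp
qed

definition G :: "real \<Rightarrow> real \<Rightarrow> real" where
  "G n s = exp (- n * exp (- (a2 - a1) * s)) * (a1 * exp (- a1 * s))"

lemma G_nonneg: "0 \<le> G n s" unfolding G_def using a1pos by simp

lemma G_measurable[measurable]: "G n \<in> borel_measurable borel"
  unfolding G_def by measurable

lemma exp_abs_int: "integrable lborel (\<lambda>x. a1 * exp (- a1 * x) * indicator {0..} x + a1 * exp (a1 * x) * indicator {..0} x)"
proof -
  have "set_integrable lborel {0<..} (\<lambda>x. a1 * exp (- a1 * x))" by (rule int_exp_Ioi(1)[OF a1pos])
  hence i1: "set_integrable lborel {0..} (\<lambda>x. a1 * exp (- a1 * x))"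
    by (subst set_integrable_discrete_difference[where X="{0}"]) auto
  hence i1': "integrable lborel (\<lambda>x. a1 * exp (- a1 * x) * indicator {0..} x)"
    unfolding set_integrable_def by (simp add: mult.commute)
  have "integrable lborel (\<lambda>x. (\<lambda>x. a1 * exp (- a1 * x) * indicator {0..} x) (0 + (-1) * x))"
    by (rule lborel_integrable_real_affine[OF i1']) simp
  hence i2: "integrable lborel (\<lambda>x. a1 * exp (a1 * x) * indicator {..0} x)"
    by (simp add: indicator_def)
  show ?thesis using i1' i2 by (rule Bochner_Integration.integrable_add)
qed

lemma G1_int: "integrable lborel (G 1)"
proof -
  obtain k :: nat where k: "2 * a1 / (a2 - a1) \<le> real k" "0 < k"
    using real_arch_simple[of "2 * a1 / (a2 - a1)"] by (metis add.commute le_add_same_cancel2 le_refl linorder_not_le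
        not_gr0 of_nat_0 of_nat_Suc real_arch_simple Suc_le_eq of_nat_le_iff order_trans less_imp_le_nat)
  define kk where "kk = real k ^ k"
  have kk1: "1 \<le> kk" unfolding kk_def using k by simp
  have kb: "2 * a1 \<le> real k * (a2 - a1)" using k a12 by (simp add: field_simps)
  have bnd: "\<bar>G 1 x\<bar> \<le> kk * (a1 * exp (- a1 * x) * indicator {0..} x + a1 * exp (a1 * x) * indicator {..0} x)" for x
  proof (cases "0 \<le> x")
    case True
    have "G 1 x \<le> 1 * (a1 * exp (- a1 * x))" unfolding G_def using a1pos by (intro mult_right_mono) auto
    also have "\<dots> \<le> kk * (a1 * exp (- a1 * x))" using kk1 a1pos by (intro mult_right_mono) auto
    also have "\<dots> \<le> kk * (a1 * exp (- a1 * x) * indicator {0..} x + a1 * exp (a1 * x) * indicator {..0} x)"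
      using True kk1 a1pos by (intro mult_left_mono) (auto simp: indicator_def)
    finally show ?thesis using G_nonneg[of 1 x] by simp
  next
    case False
    define v where "v = exp (- (a2 - a1) * x)"
    have v0: "0 < v" unfolding v_def by simp
    have "exp (- v) \<le> (real k / v) ^ k" by (rule exp_neg_pow_bound[OF v0 k(2)])
    also have "\<dots> = kk * exp (real k * (a2 - a1) * x)"
    proof -
      have "real k / v = real k * exp ((a2 - a1) * x)"
      proof -
        have "inverse v = exp ((a2 - a1) * x)" unfolding v_def by (simp add: exp_minus[symmetric] algebra_simps)
        thus ?thesis by (simp add: divide_inverse)
      qed
      hence "(real k / v) ^ k = real k ^ k * exp ((a2 - a1) * x) ^ k" by (simp add: power_mult_distrib)
      also have "exp ((a2 - a1) * x) ^ k = exp (real k * ((a2 - a1) * x))" by (rule exp_of_nat_mult[symmetric])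
      finally show ?thesis unfolding kk_def by (simp add: mult.assoc)
    qed
    finally have e1: "exp (- v) \<le> kk * exp (real k * (a2 - a1) * x)" .
    have "G 1 x = exp (- v) * (a1 * exp (- a1 * x))" unfolding G_def v_def by simp
    also have "\<dots> \<le> kk * exp (real k * (a2 - a1) * x) * (a1 * exp (- a1 * x))"
      using e1 a1pos by (intro mult_right_mono) auto
    also have "\<dots> = kk * (a1 * exp ((real k * (a2 - a1) - a1) * x))"
      by (simp add: exp_add[symmetric] algebra_simps)
    also have "\<dots> \<le> kk * (a1 * exp (a1 * x))"
    proof -
      have "(real k * (a2 - a1) - a1) * x \<le> a1 * x"
        using False kb by (intro mult_right_mono_neg) auto
      hence "exp ((real k * (a2 - a1) - a1) * x) \<le> exp (a1 * x)" by simp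
      thus ?thesis using kk1 a1pos by (intro mult_left_mono) auto
    qed
    also have "\<dots> = kk * (a1 * exp (- a1 * x) * indicator {0..} x + a1 * exp (a1 * x) * indicator {..0} x)"
      using False by (simp add: indicator_def)
    finally show ?thesis using G_nonneg[of 1 x] by simp
  qed
  show ?thesis
    by (rule Bochner_Integration.integrable_bound[OF integrable_mult_right[OF exp_abs_int, of kk]])
       (use bnd in \<open>auto intro: order_trans[OF _ abs_ge_self]\<close>)
qed

lemma G_shift:
  assumes n: "0 < n"
  shows "G n (ln n / (a2 - a1) + x) = n powr (- (a1 / (a2 - a1))) * G 1 x"
proof -
  have b: "0 < a2 - a1" using a12 by simp
  have 1: "n * exp (- (a2 - a1) * (ln n / (a2 - a1) + x)) = exp (- (a2 - a1) * x)"
  proof -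
    have "- (a2 - a1) * (ln n / (a2 - a1) + x) = - ln n + (- (a2 - a1) * x)"
      using b by (simp add: field_simps)
    hence "exp (- (a2 - a1) * (ln n / (a2 - a1) + x)) = exp (- ln n) * exp (- (a2 - a1) * x)"
      by (simp only: exp_add)
    thus ?thesis using n by (simp add: exp_minus)
  qed
  have 2: "exp (- a1 * (ln n / (a2 - a1) + x)) = n powr (- (a1 / (a2 - a1))) * exp (- a1 * x)"
    using n b by (simp add: powr_def algebra_simps exp_add[symmetric])
  show ?thesis unfolding G_def using 1 2 by (simp add: algebra_simps)
qed

lemma G_int:
  assumes n: "0 < n"
  shows "integrable lborel (G n)" "(\<integral>x. G n x \<partial>lborel) = n powr (- (a1 / (a2 - a1))) * (\<integral>x. G 1 x \<partial>lborel)"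
proof -
  have b: "0 < a2 - a1" using a12 by simp
  have e: "(\<lambda>x. G n (ln n / (a2 - a1) + 1 * x)) = (\<lambda>x. n powr (- (a1 / (a2 - a1))) * G 1 x)"
    using G_shift[OF n] by simp
  have "integrable lborel (\<lambda>x. G n (ln n / (a2 - a1) + 1 * x))" unfolding e using G1_int by simp
  thus "integrable lborel (G n)" using lborel_integrable_real_affine_iff[of 1 "G n" "ln n / (a2 - a1)"] by simp
  have "(\<integral>x. G n x \<partial>lborel) = \<bar>1\<bar> *\<^sub>R (\<integral>x. G n (ln n / (a2 - a1) + 1 * x) \<partial>lborel)"
    by (rule lborel_integral_real_affine) simp
  thus "(\<integral>x. G n x \<partial>lborel) = n powr (- (a1 / (a2 - a1))) * (\<integral>x. G 1 x \<partial>lborel)"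
    unfolding e by simp
qed

lemma L_int:
  "set_integrable lborel {0<..} (\<lambda>s. rh s ^ m * pd s)"
proof (rule dom_pd[where C=1])
  show "(\<lambda>s. rh s ^ m * pd s) \<in> borel_measurable borel" by measurable
  fix y :: real assume y: "0 < y"
  have "\<bar>rh y ^ m\<bar> \<le> 1" using rh_nonneg[OF y] rh_le1[of y] y by (simp add: power_le_one)
  thus "\<bar>rh y ^ m * pd y\<bar> \<le> 1 * pd y" using pd_pos[of y]
    by (simp add: abs_mult abs_of_pos[OF pd_pos] mult_right_mono)
qed

lemma L_bound:
  assumes n: "1 \<le> n"
  shows "(LINT s:{0<..}|lborel. rh s ^ (n - 1) * pd s)
    \<le> (exp 1 * (\<integral>x. G 1 x \<partial>lborel)) * real n powr (- (a1 / (a2 - a1)))"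
proof -
  have n0: "0 < real n" using n by simp
  note Gi = G_int[OF n0]
  have pt: "rh s ^ (n - 1) * pd s \<le> exp 1 * G (real n) s" if s: "0 < s" for s
  proof -
    define v where "v = exp (- (a2 - a1) * s)"
    have "(a1 - a2) * s \<le> 0" using s a12 by (intro mult_nonpos_nonneg) auto
    hence v: "0 < v" "v \<le> 1" unfolding v_def by auto
    have "rh s ^ (n - 1) \<le> (1 - v) ^ (n - 1)"
      using rh_nonneg[OF s] rh_le[of s] s unfolding v_def by (intro power_mono) auto
    also have "\<dots> \<le> exp (- v) ^ (n - 1)"
      using v exp_ge_add_one_self[of "- v"] by (intro power_mono) auto
    also have "\<dots> = exp (real (n - 1) * (- v))" by (rule exp_of_nat_mult[symmetric])
    also have "\<dots> = exp v * exp (- real n * v)"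
      using n by (simp add: exp_add[symmetric] of_nat_diff algebra_simps)
    also have "\<dots> \<le> exp 1 * exp (- real n * v)" using v by simp
    finally have "rh s ^ (n - 1) \<le> exp 1 * exp (- real n * v)" .
    hence "rh s ^ (n - 1) * pd s \<le> exp 1 * exp (- real n * v) * pd s"
      by (rule mult_right_mono) (use pd_pos[of s] in simp)
    thus ?thesis unfolding G_def v_def pd_def by (simp add: algebra_simps)
  qed
  have iG: "set_integrable lborel {0<..} (\<lambda>s. exp 1 * G (real n) s)"
    unfolding set_integrable_def using Gi(1)
    by (intro integrable_mult_indicator) auto
  have "(LINT s:{0<..}|lborel. rh s ^ (n - 1) * pd s) \<le> (LINT s:{0<..}|lborel. exp 1 * G (real n) s)"
    by (rule set_integral_mono[OF L_int iG pt]) simp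
  also have "\<dots> \<le> (\<integral>s. exp 1 * G (real n) s \<partial>lborel)"
    unfolding set_lebesgue_integral_def
    by (rule integral_mono) (use iG Gi(1) G_nonneg in \<open>auto simp: set_integrable_def indicator_def\<close>)
  also have "\<dots> = exp 1 * ((real n) powr (- (a1 / (a2 - a1))) * (\<integral>x. G 1 x \<partial>lborel))"
    using Gi(2) by simp
  finally show ?thesis by (simp add: algebra_simps)
qed

lemma set_nonneg:
  fixes f :: "real \<Rightarrow> real"
  assumes "\<And>x. x \<in> A \<Longrightarrow> 0 \<le> f x"
  shows "0 \<le> (LINT x:A|lborel. f x)"
  unfolding set_lebesgue_integral_def
  by (rule integral_nonneg_AE) (use assms in \<open>auto simp: indicator_def\<close>)

lemma T_measurable[measurable]:
  assumes [measurable]: "u \<in> borel_measurable borel"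
  shows "T u \<in> borel_measurable borel"
  unfolding T_def by measurable

lemma bnd_lohi:
  assumes [measurable]: "f \<in> borel_measurable borel" and lo: "\<And>x. lo \<le> f x" and hi: "\<And>x. f x \<le> hi"
  shows "bnd (max \<bar>lo\<bar> \<bar>hi\<bar>) f"
proof -
  have "\<bar>f x\<bar> \<le> max \<bar>lo\<bar> \<bar>hi\<bar>" for x using lo[of x] hi[of x] by (smt (verit))
  thus ?thesis unfolding bnd_def by simp
qed

lemma Tf_bound:
  assumes [measurable]: "f \<in> borel_measurable borel" and lo: "\<And>x. lo \<le> f x" and hi: "\<And>x. f x \<le> hi"
    and t: "0 < t"
  shows "\<bar>T f t\<bar> \<le> hi - lo"
proof -
  have bf: "bnd (max \<bar>lo\<bar> \<bar>hi\<bar>) f" by (rule bnd_lohi[OF _ lo hi]) simp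
  note I = pdu_int(2)[OF bf less_imp_le[OF t]]
  have Pt: "0 < Pi t" using Pi_pos[OF t] .
  have J: "set_integrable lborel {0<..t} (\<lambda>y. c * pd y)" for c
    using pd_int_Ioc(1)[of 0 t] t by simp
  have eq: "(LINT y:{0<..t}|lborel. c * pd y) = c * Pi t" for c
    by (simp only: set_integral_mult_right pd_int_Ioc(2)[of 0 t] less_imp_le[OF t]) (simp add: Pi_def)
  have "S f t \<le> hi * Pi t" unfolding S_def eq[symmetric]
  proof (rule set_integral_mono[OF I J])
    fix y :: real assume "y \<in> {0<..t}"
    show "pd y * f y \<le> hi * pd y" using hi[of y] pd_pos[of y] by (simp add: mult.commute mult_left_mono)
  qed
  moreover have "lo * Pi t \<le> S f t" unfolding S_def eq[symmetric]
  proof (rule set_integral_mono[OF J I])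
    fix y :: real assume "y \<in> {0<..t}"
    have "lo * pd y \<le> f y * pd y" by (rule mult_right_mono[OF lo]) (use pd_pos[of y] in simp)
    thus "lo * pd y \<le> pd y * f y" by (simp add: mult.commute)
  qed
  ultimately have "lo \<le> S f t / Pi t" "S f t / Pi t \<le> hi" using Pt by (simp_all add: field_simps)
  thus ?thesis unfolding T_def using lo[of t] hi[of t] by simp
qed

lemma mean0_Pn:
  assumes bu: "bnd B u" and m0: "(LINT x:{0<..}|lborel. pd x * u x) = 0"
  shows "(LINT x:{0<..}|lborel. pd x * (P ^^ n) u x) = 0"
proof (induction n)
  case 0 thus ?case using m0 by simp
next
  case (Suc n)
  have "(LINT x:{0<..}|lborel. pd x * (P ^^ Suc n) u x) = (LINT x:{0<..}|lborel. pd x * P ((P ^^ n) u) x)" by simp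
  also have "\<dots> = (LINT x:{0<..}|lborel. pd x * (P ^^ n) u x)" by (rule Inv[OF Pn_bnd[OF bu]])
  finally show ?case using Suc by simp
qed

lemma pointwise_bound:
  assumes [measurable]: "f \<in> borel_measurable borel" and lo: "\<And>x. lo \<le> f x" and hi: "\<And>x. f x \<le> hi"
    and m0: "(LINT x:{0<..}|lborel. pd x * f x) = 0" and n: "1 \<le> n" and t: "0 < t"
  shows "\<bar>(P ^^ n) f t\<bar> \<le> (hi - lo) * rh t ^ n + (hi - lo) * (a2 / a1) * (LINT s:{0<..}|lborel. rh s ^ (n - 1) * pd s)"
proof -
  define K where "K = hi - lo"
  have K0: "0 \<le> K" unfolding K_def using lo[of 0] hi[of 0] by simp
  have bf: "bnd (max \<bar>lo\<bar> \<bar>hi\<bar>) f" by (rule bnd_lohi[OF _ lo hi]) simp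
  define u where "u = (P ^^ n) f"
  have bu: "bnd (max \<bar>lo\<bar> \<bar>hi\<bar>) u" unfolding u_def by (rule Pn_bnd[OF bf])
  have mu: "(LINT x:{0<..}|lborel. pd x * u x) = 0" unfolding u_def by (rule mean0_Pn[OF bf m0])
  have Tu: "T u s = rh s ^ n * T f s" if "0 < s" for s unfolding u_def by (rule TPn[OF bf that])
  have TB: "\<bar>T f s\<bar> \<le> K" if "0 < s" for s unfolding K_def by (rule Tf_bound[OF _ lo hi that]) simp
  have Pt: "0 < Pi t" using Pi_pos[OF t] .
  have "u t = T u t - (LINT s:{t<..}|lborel. T u s * pd s / Pi s)" by (rule inv_formula[OF bu mu t])
  also have "(LINT s:{t<..}|lborel. T u s * pd s / Pi s) = (LINT s:{t<..}|lborel. rh s ^ n * T f s * pd s / Pi s)"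
    by (rule set_lebesgue_integral_cong) (use t Tu in auto)
  finally have ut: "u t = rh t ^ n * T f t - (LINT s:{t<..}|lborel. rh s ^ n * T f s * pd s / Pi s)"
    using Tu[OF t] by simp
  define h where "h s = rh s ^ n * T f s * pd s / Pi s" for s
  define g where "g s = K * (a2 / a1) * (rh s ^ (n - 1) * pd s)" for s
  have hg: "\<bar>h s\<bar> \<le> g s" if s: "t < s" for s
  proof -
    have s0: "0 < s" using s t by simp
    have Ps: "0 < Pi s" using Pi_pos[OF s0] .
    have r0: "0 \<le> rh s" using rh_nonneg[OF s0] .
    have "rh s ^ n = rh s ^ (n - 1) * rh s" using n by (metis power_minus_mult not_one_le_zero not_less_iff_gr_or_eq n less_le_trans zero_less_one)
    hence "rh s ^ n / Pi s = rh s ^ (n - 1) * (rh s / Pi s)" by simp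
    also have "\<dots> \<le> rh s ^ (n - 1) * (a2 / a1)"
      using rh_le_Pi[OF s0] Ps r0 by (intro mult_left_mono) (auto simp: field_simps)
    finally have q: "rh s ^ n / Pi s \<le> rh s ^ (n - 1) * (a2 / a1)" .
    have "\<bar>h s\<bar> = \<bar>T f s\<bar> * (rh s ^ n / Pi s) * pd s"
      unfolding h_def using r0 Ps by (simp add: abs_mult abs_of_pos[OF pd_pos] abs_of_pos[OF Ps])
    also have "\<dots> \<le> K * (rh s ^ (n - 1) * (a2 / a1)) * pd s"
      using TB[OF s0] q pd_pos[of s] K0 r0 Ps by (intro mult_right_mono mult_mono) auto
    also have "\<dots> = g s" unfolding g_def by simp
    finally show ?thesis .
  qed
  have ih: "set_integrable lborel {t<..} h"
  proof (rule dom_pd[where C="K / Pi t"])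
    show "h \<in> borel_measurable borel" unfolding h_def by measurable
    fix s :: real assume s: "t < s"
    have s0: "0 < s" using s t by simp
    have "\<bar>h s\<bar> = \<bar>T f s\<bar> * rh s ^ n * pd s / Pi s"
      unfolding h_def using rh_nonneg[OF s0] Pi_pos[OF s0]
      by (simp add: abs_mult abs_of_pos[OF pd_pos])
    also have "\<dots> \<le> K * 1 * pd s / Pi t"
    proof (rule frac_le)
      show "0 \<le> K * 1 * pd s" using K0 pd_pos[of s] by simp
      show "\<bar>T f s\<bar> * rh s ^ n * pd s \<le> K * 1 * pd s"
        using TB[OF s0] rh_nonneg[OF s0] rh_le1[of s] s0 pd_pos[of s] K0
        by (intro mult_right_mono mult_mono power_le_one) auto
      show "0 < Pi t" by (rule Pt)
      show "Pi t \<le> Pi s" using s by (intro Pi_mono) simp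
    qed
    finally show "\<bar>h s\<bar> \<le> K / Pi t * pd s" by simp
  qed
  have ig: "set_integrable lborel {0<..} g" unfolding g_def using L_int by simp
  note igs = split_Ioi[OF ig less_imp_le[OF t]]
  have "(LINT s:{t<..}|lborel. h s) \<le> (LINT s:{t<..}|lborel. g s)"
    by (rule set_integral_mono[OF ih igs(2)]) (use hg in \<open>auto dest: abs_le_D1\<close>)
  moreover have "- (LINT s:{t<..}|lborel. h s) \<le> (LINT s:{t<..}|lborel. g s)"
  proof -
    have ih': "set_integrable lborel {t<..} (\<lambda>s. - h s)" using ih unfolding set_integrable_def by simp
    have "(LINT s:{t<..}|lborel. - h s) \<le> (LINT s:{t<..}|lborel. g s)"
      by (rule set_integral_mono[OF ih' igs(2)]) (use hg in \<open>auto dest: abs_le_D2\<close>)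
    thus ?thesis by (simp add: set_integral_uminus[OF ih])
  qed
  moreover have "(LINT s:{t<..}|lborel. g s) \<le> (LINT s:{0<..}|lborel. g s)"
  proof -
    have "0 \<le> (LINT s:{0<..t}|lborel. g s)"
    proof (rule set_nonneg)
      fix s :: real assume "s \<in> {0<..t}"
      hence "0 \<le> rh s" using rh_nonneg by simp
      thus "0 \<le> g s" unfolding g_def using K0 ratio_pos pd_pos[of s]
        by (intro mult_nonneg_nonneg) auto
    qed
    thus ?thesis using igs(3) by simp
  qed
  moreover have "(LINT s:{0<..}|lborel. g s) = K * (a2 / a1) * (LINT s:{0<..}|lborel. rh s ^ (n - 1) * pd s)"
    unfolding g_def by simp
  moreover have "\<bar>rh t ^ n * T f t\<bar> \<le> K * rh t ^ n"
  proof -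
    have "\<bar>T f t\<bar> * rh t ^ n \<le> K * rh t ^ n"
      by (rule mult_right_mono[OF TB[OF t]]) (use rh_nonneg[OF t] in simp)
    thus ?thesis using rh_nonneg[OF t] by (simp add: abs_mult mult.commute)
  qed
  ultimately show ?thesis using ut unfolding u_def[symmetric] K_def h_def[symmetric] by (simp add: abs_le_iff)
qed

lemma sq_sum_le: "(x + y)\<^sup>2 \<le> 2 * x\<^sup>2 + 2 * (y::real)\<^sup>2"
proof -
  have "0 \<le> (x - y)\<^sup>2" by simp
  thus ?thesis by (simp add: power2_eq_square algebra_simps)
qed

lemma L2_bound:
  assumes [measurable]: "f \<in> borel_measurable borel" and lo: "\<And>x. lo \<le> f x" and hi: "\<And>x. f x \<le> hi"
    and m0: "(LINT x:{0<..}|lborel. pd x * f x) = 0" and n: "1 \<le> n"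
  shows "(LINT x:{0<..}|lborel. pd x * ((P ^^ n) f x)\<^sup>2)
    \<le> 2 * (hi - lo)\<^sup>2 * (1 + (a2 / a1)\<^sup>2) * (LINT s:{0<..}|lborel. rh s ^ (n - 1) * pd s)"
proof -
  define K where "K = hi - lo"
  define c where "c = a2 / a1"
  define Lv where "Lv = (LINT s:{0<..}|lborel. rh s ^ (n - 1) * pd s)"
  have K0: "0 \<le> K" unfolding K_def using lo[of 0] hi[of 0] by simp
  have c0: "0 \<le> c" unfolding c_def using ratio_pos by simp
  have bf: "bnd (max \<bar>lo\<bar> \<bar>hi\<bar>) f" by (rule bnd_lohi[OF _ lo hi]) simp
  define u where "u = (P ^^ n) f"
  have bu: "bnd (max \<bar>lo\<bar> \<bar>hi\<bar>) u" unfolding u_def by (rule Pn_bnd[OF bf])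
  have [measurable]: "u \<in> borel_measurable borel" using bu unfolding bnd_def by simp
  have rhle: "0 \<le> rh s ^ (n - 1)" "rh s ^ (n - 1) \<le> 1" if "0 < s" for s
    using rh_nonneg[OF that] rh_le1[of s] that by (auto simp: power_le_one)
  have Lv0: "0 \<le> Lv" unfolding Lv_def
  proof (rule set_nonneg)
    fix s :: real assume "s \<in> {0<..}"
    thus "0 \<le> rh s ^ (n - 1) * pd s" using rhle(1)[of s] pd_pos[of s] by simp
  qed
  have pd1: "(LINT s:{0<..}|lborel. pd s) = 1" using pd_int(2)[of 0] by simp
  have Lv1: "Lv \<le> 1" unfolding Lv_def pd1[symmetric]
    by (rule set_integral_mono[OF L_int pd_int(1)]) (use rhle pd_pos in \<open>auto intro: mult_left_le_one_le less_imp_le\<close>)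
  define w where "w x = 2 * K\<^sup>2 * (rh x ^ (n - 1) * pd x) + (2 * K\<^sup>2 * c\<^sup>2 * Lv\<^sup>2) * pd x" for x
  have pt: "pd x * (u x)\<^sup>2 \<le> w x" if x: "0 < x" for x
  proof -
    have ub: "\<bar>u x\<bar> \<le> K * rh x ^ n + K * c * Lv"
      unfolding u_def K_def c_def Lv_def by (rule pointwise_bound[OF _ lo hi m0 n x]) simp
    have a0: "0 \<le> K * rh x ^ n" using K0 rh_nonneg[OF x] by simp
    have b0: "0 \<le> K * c * Lv" using K0 c0 Lv0 by simp
    have "(u x)\<^sup>2 = \<bar>u x\<bar>\<^sup>2" by simp
    also have "\<dots> \<le> (K * rh x ^ n + K * c * Lv)\<^sup>2" using ub by (intro power_mono) auto
    also have "\<dots> \<le> 2 * (K * rh x ^ n)\<^sup>2 + 2 * (K * c * Lv)\<^sup>2" by (rule sq_sum_le)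
    also have "(K * rh x ^ n)\<^sup>2 = K\<^sup>2 * rh x ^ (2 * n)" by (simp add: power_mult_distrib power_mult[symmetric] mult.commute)
    finally have u2: "(u x)\<^sup>2 \<le> 2 * (K\<^sup>2 * rh x ^ (2 * n)) + 2 * (K * c * Lv)\<^sup>2" .
    have "rh x ^ (2 * n) \<le> rh x ^ (n - 1)"
      using rh_nonneg[OF x] rh_le1[of x] x by (intro power_decreasing) auto
    hence "K\<^sup>2 * rh x ^ (2 * n) \<le> K\<^sup>2 * rh x ^ (n - 1)" by (rule mult_left_mono) simp
    with u2 have "(u x)\<^sup>2 \<le> 2 * (K\<^sup>2 * rh x ^ (n - 1)) + 2 * (K * c * Lv)\<^sup>2" by linarith
    hence "pd x * (u x)\<^sup>2 \<le> pd x * (2 * (K\<^sup>2 * rh x ^ (n - 1)) + 2 * (K * c * Lv)\<^sup>2)"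
      by (rule mult_left_mono) (use pd_pos[of x] in simp)
    thus ?thesis unfolding w_def by (simp add: algebra_simps power_mult_distrib)
  qed
  have iu: "set_integrable lborel {0<..} (\<lambda>x. pd x * (u x)\<^sup>2)"
  proof (rule dom_pd[where C="(max \<bar>lo\<bar> \<bar>hi\<bar>)\<^sup>2"])
    show "(\<lambda>x. pd x * (u x)\<^sup>2) \<in> borel_measurable borel" by measurable
    fix y :: real assume "0 < y"
    hence "\<bar>u y\<bar> \<le> max \<bar>lo\<bar> \<bar>hi\<bar>" using bu unfolding bnd_def by simp
    hence "\<bar>u y\<bar>\<^sup>2 \<le> (max \<bar>lo\<bar> \<bar>hi\<bar>)\<^sup>2" by (intro power_mono) auto
    hence "(u y)\<^sup>2 \<le> (max \<bar>lo\<bar> \<bar>hi\<bar>)\<^sup>2" by simp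
    thus "\<bar>pd y * (u y)\<^sup>2\<bar> \<le> (max \<bar>lo\<bar> \<bar>hi\<bar>)\<^sup>2 * pd y"
      using pd_pos[of y] by (simp add: abs_mult abs_of_pos[OF pd_pos] mult.commute mult_left_mono)
  qed
  have iw: "set_integrable lborel {0<..} w" unfolding w_def
    using L_int[of "n - 1"] pd_int(1)[of 0] by (intro set_integral_add(1)) auto
  have "(LINT x:{0<..}|lborel. pd x * (u x)\<^sup>2) \<le> (LINT x:{0<..}|lborel. w x)"
    by (rule set_integral_mono[OF iu iw]) (use pt in auto)
  also have "(LINT x:{0<..}|lborel. w x) = 2 * K\<^sup>2 * Lv + 2 * K\<^sup>2 * c\<^sup>2 * Lv\<^sup>2"
  proof -
    have "(LINT x:{0<..}|lborel. w x) = (LINT x:{0<..}|lborel. 2 * K\<^sup>2 * (rh x ^ (n - 1) * pd x))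
        + (LINT x:{0<..}|lborel. (2 * K\<^sup>2 * c\<^sup>2 * Lv\<^sup>2) * pd x)"
      unfolding w_def using L_int[of "n - 1"] pd_int(1)[of 0] by (intro set_integral_add(2)) auto
    thus ?thesis using pd1 unfolding Lv_def by simp
  qed
  also have "\<dots> \<le> 2 * K\<^sup>2 * (1 + c\<^sup>2) * Lv"
  proof -
    have "Lv\<^sup>2 \<le> Lv" using Lv0 Lv1 by (simp add: power2_eq_square mult_left_le_one_le)
    hence "2 * K\<^sup>2 * c\<^sup>2 * Lv\<^sup>2 \<le> 2 * K\<^sup>2 * c\<^sup>2 * Lv" by (intro mult_left_mono) auto
    thus ?thesis by (simp add: algebra_simps)
  qed
  finally show ?thesis unfolding u_def K_def c_def Lv_def .
qed

lemma imhP_eq: "0 < x \<Longrightarrow> imh_P a1 a2 u x = P u x"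
  by (simp add: imh_P_def imh_rho_def kern kint(2) Kop_def P_def rh_def)

lemma P_cong: assumes "\<And>y. 0 < y \<Longrightarrow> u y = v y" "0 < x" shows "P u x = P v x"
proof -
  have "Kop u x = Kop v x" unfolding Kop_def by (rule set_lebesgue_integral_cong) (use assms in auto)
  thus ?thesis unfolding P_def using assms by simp
qed

lemma imhPn_eq: "0 < x \<Longrightarrow> (imh_P a1 a2 ^^ n) u x = (P ^^ n) u x"
proof (induction n arbitrary: x)
  case 0 thus ?case by simp
next
  case (Suc n)
  have "(imh_P a1 a2 ^^ Suc n) u x = P ((imh_P a1 a2 ^^ n) u) x" using imhP_eq[OF Suc.prems] by simp
  also have "\<dots> = P ((P ^^ n) u) x" by (rule P_cong[OF Suc.IH Suc.prems])
  finally show ?case by simp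
qed

lemma imhP_measurable:
  assumes [measurable]: "u \<in> borel_measurable borel"
  shows "imh_P a1 a2 u \<in> borel_measurable borel"
  unfolding imh_P_def imh_rho_def imh_acc_def imh_w_def exp_dens_def set_lebesgue_integral_def by measurable

lemma imhPn_measurable:
  "u \<in> borel_measurable borel \<Longrightarrow> (imh_P a1 a2 ^^ n) u \<in> borel_measurable borel"
  by (induction n) (auto intro: imhP_measurable)

lemma Pn_measurable:
  "u \<in> borel_measurable borel \<Longrightarrow> (P ^^ n) u \<in> borel_measurable borel"
  by (induction n) (auto intro: P_measurable)

lemma P_cong_AE:
  assumes [measurable]: "u \<in> borel_measurable borel" "v \<in> borel_measurable borel"
    and ae: "AE y in lborel. 0 < y \<longrightarrow> u y = v y"
  shows "AE y in lborel. 0 < y \<longrightarrow> P u y = P v y"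
proof -
  have "Kop u x = Kop v x" for x unfolding Kop_def
    by (rule set_lebesgue_integral_cong_AE) (use ae in \<open>auto elim!: AE_mp\<close>)
  thus ?thesis using ae unfolding P_def by (auto elim!: AE_mp)
qed

lemma Pn_cong_AE:
  assumes [measurable]: "u \<in> borel_measurable borel" "v \<in> borel_measurable borel"
    and ae: "AE y in lborel. 0 < y \<longrightarrow> u y = v y"
  shows "AE y in lborel. 0 < y \<longrightarrow> (P ^^ n) u y = (P ^^ n) v y"
proof (induction n)
  case 0 thus ?case using ae by simp
next
  case (Suc n)
  show ?case using P_cong_AE[OF Pn_measurable[of u n] Pn_measurable[of v n] Suc] by simp
qed

lemma dens_measurable[measurable]: "(\<lambda>x. ennreal (indicator {0<..} x * exp_dens a1 x)) \<in> borel_measurable lborel"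
  unfolding exp_dens_def by measurable

lemma AE_piM: "(AE x in lborel. 0 < x \<longrightarrow> Q x) \<Longrightarrow> AE x in piM a1. Q x"
  unfolding piM_def by (subst AE_density[OF dens_measurable]) (auto elim!: AE_mp split: split_indicator)

lemma AE_piM_D:
  assumes "AE x in piM a1. Q x" shows "AE x in lborel. 0 < x \<longrightarrow> Q x"
proof -
  have "AE x in lborel. 0 < ennreal (indicator {0<..} x * exp_dens a1 x) \<longrightarrow> Q x"
    using assms unfolding piM_def by (subst (asm) AE_density[OF dens_measurable])
  moreover have "0 < ennreal (indicator {0<..} x * exp_dens a1 x)" if "0 < x" for x
    using that a1pos by (simp add: exp_dens_def)
  ultimately show ?thesis by (auto elim!: AE_mp)
qed

lemma int_piM:
  assumes [measurable]: "g \<in> borel_measurable borel"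
  shows "(\<integral>x. g x \<partial>piM a1) = (LINT x:{0<..}|lborel. pd x * g x)"
proof -
  have "(\<integral>x. g x \<partial>piM a1) = (\<integral>x. (indicator {0<..} x * exp_dens a1 x) *\<^sub>R g x \<partial>lborel)"
    unfolding piM_def
  proof (rule integral_density)
    show "AE x in lborel. 0 \<le> indicator {0<..} x * exp_dens a1 x"
      using a1pos by (intro AE_I2) (simp add: exp_dens_def)
  qed (auto simp: exp_dens_def)
  also have "\<dots> = (LINT x:{0<..}|lborel. pd x * g x)"
    unfolding set_lebesgue_integral_def by (simp add: exp_dens_def pd_def mult.assoc)
  finally show ?thesis .
qed

lemma piM_space: "emeasure (piM a1) (space (piM a1)) = 1"
proof -
  have "emeasure (piM a1) (space (piM a1)) = (\<integral>\<^sup>+ x. ennreal (indicator {0<..} x * exp_dens a1 x) * indicator UNIV x \<partial>lborel)"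
    unfolding piM_def by (subst emeasure_density) auto
  also have "\<dots> = (\<integral>\<^sup>+ x. ennreal (indicator {0<..} x * pd x) \<partial>lborel)"
    by (simp add: exp_dens_def pd_def)
  also have "\<dots> = ennreal (\<integral>x. indicator {0<..} x * pd x \<partial>lborel)"
    by (rule nn_integral_eq_integral) (use pd_int(1)[of 0] pd_pos in \<open>auto simp: set_integrable_def less_imp_le\<close>)
  also have "(\<integral>x. indicator {0<..} x * pd x \<partial>lborel) = 1"
    using pd_int(2)[of 0] unfolding set_lebesgue_integral_def by simp
  finally show ?thesis by simp
qed

lemma bridge:
  assumes [measurable]: "f \<in> borel_measurable borel" "g \<in> borel_measurable borel"
    and ae: "AE x in lborel. 0 < x \<longrightarrow> f x = g x"
  shows "(\<integral>x. ((imh_P a1 a2 ^^ n) f x)\<^sup>2 \<partial>piM a1) = (LINT x:{0<..}|lborel. pd x * ((P ^^ n) g x)\<^sup>2)"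
proof -
  have [measurable]: "(imh_P a1 a2 ^^ n) f \<in> borel_measurable borel" by (rule imhPn_measurable) simp
  have [measurable]: "(P ^^ n) g \<in> borel_measurable borel" by (rule Pn_measurable) simp
  have ae2: "AE x in lborel. 0 < x \<longrightarrow> (P ^^ n) f x = (P ^^ n) g x" by (rule Pn_cong_AE[OF _ _ ae]) auto
  have "AE x in piM a1. ((imh_P a1 a2 ^^ n) f x)\<^sup>2 = ((P ^^ n) g x)\<^sup>2"
    by (rule AE_piM) (use ae2 imhPn_eq in \<open>auto elim!: AE_mp\<close>)
  hence "(\<integral>x. ((imh_P a1 a2 ^^ n) f x)\<^sup>2 \<partial>piM a1) = (\<integral>x. ((P ^^ n) g x)\<^sup>2 \<partial>piM a1)"
    by (intro integral_cong_AE) (auto simp: piM_def)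
  also have "\<dots> = (LINT x:{0<..}|lborel. pd x * ((P ^^ n) g x)\<^sup>2)" by (rule int_piM) simp
  finally show ?thesis .
qed

end

theorem proposition28:
  fixes a1 a2 :: real
  assumes "0 < a1" and "a1 < a2"
  shows "\<exists>C>0. \<forall>f \<in> L2_0 (piM a1). \<forall>n::nat. n \<ge> 1 \<longrightarrow>
           ereal (\<integral>x. ((imh_P a1 a2 ^^ n) f x)\<^sup>2 \<partial>piM a1)
             \<le> ereal C * (osc (piM a1) f)\<^sup>2 * ereal (real n powr (- (a1 / (a2 - a1))))"
proof -
  interpret imh a1 a2 by unfold_locales (rule assms)+
  define C0 where "C0 = exp 1 * (\<integral>x. G 1 x \<partial>lborel)"
  have C00: "0 \<le> C0" unfolding C0_def using G_nonneg by (simp add: integral_nonneg_AE)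
  define C where "C = 2 * (1 + (a2 / a1)\<^sup>2) * C0 + 1"
  have "0 \<le> 2 * (1 + (a2 / a1)\<^sup>2) * C0" using C00 by (intro mult_nonneg_nonneg) auto
  hence Cpos: "0 < C" unfolding C_def by linarith
  show ?thesis
  proof (intro exI[of _ C] conjI Cpos ballI allI impI)
    fix f :: "real \<Rightarrow> real" and n :: nat
    assume fL: "f \<in> L2_0 (piM a1)" and n: "1 \<le> n"
    have sets: "sets (piM a1) = sets borel" by (simp add: piM_def)
    have fm[measurable]: "f \<in> borel_measurable borel"
      using fL unfolding L2_0_def using measurable_cong_sets[OF sets refl] by auto
    have f0: "(\<integral>x. f x \<partial>piM a1) = 0" using fL unfolding L2_0_def by simp
    define np where "np = real n powr (- (a1 / (a2 - a1)))"
    have np0: "0 < np" unfolding np_def using n by simp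
    define E1 where "E1 = esssup (piM a1) (\<lambda>x. ereal (f x))"
    define E2 where "E2 = esssup (piM a1) (\<lambda>x. - ereal (f x))"
    have osc_eq: "osc (piM a1) f = E1 - (- E2)" unfolding osc_def E1_def E2_def by simp
    show "ereal (\<integral>x. ((imh_P a1 a2 ^^ n) f x)\<^sup>2 \<partial>piM a1)
             \<le> ereal C * (osc (piM a1) f)\<^sup>2 * ereal (real n powr (- (a1 / (a2 - a1))))"
    proof (cases "\<exists>hi m. E1 = ereal hi \<and> E2 = ereal m")
      case False
      have "osc (piM a1) f = \<infinity> \<or> osc (piM a1) f = - \<infinity>"
        unfolding osc_eq using False by (cases E1 rule: ereal_cases; cases E2 rule: ereal_cases) auto
      hence sq: "(osc (piM a1) f)\<^sup>2 = \<infinity>" by (auto simp: power2_eq_square)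
      have "ereal C * (osc (piM a1) f)\<^sup>2 = \<infinity>" unfolding sq using Cpos by simp
      hence "ereal C * (osc (piM a1) f)\<^sup>2 * ereal (real n powr (- (a1 / (a2 - a1)))) = \<infinity>"
        using np0 unfolding np_def by simp
      thus ?thesis by (simp only:) simp
    next
      case True
      then obtain hi m where e1: "E1 = ereal hi" and e2: "E2 = ereal m" by blast
      define lo where "lo = - m"
      have oscK: "osc (piM a1) f = ereal (hi - lo)" unfolding osc_eq e1 e2 lo_def by simp
      have aehi: "AE x in piM a1. f x \<le> hi"
        using esssup_AE[of "\<lambda>x. ereal (f x)" "piM a1"] unfolding E1_def[symmetric] e1 by simp
      have aelo: "AE x in piM a1. lo \<le> f x"
        using esssup_AE[of "\<lambda>x. - ereal (f x)" "piM a1"] unfolding E2_def[symmetric] e2 lo_def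
        by (auto elim!: AE_mp)
      have lohi: "lo \<le> hi"
      proof (rule ccontr)
        assume "\<not> lo \<le> hi"
        hence "AE x in piM a1. False" using aehi aelo by (auto elim!: AE_mp)
        hence "ae_filter (piM a1) = bot" by (simp add: eventually_False)
        thus False using piM_space by (simp add: ae_filter_eq_bot_iff)
      qed
      define g where "g x = max lo (min hi (f x))" for x
      have gm[measurable]: "g \<in> borel_measurable borel" unfolding g_def by measurable
      have glo: "lo \<le> g x" and ghi: "g x \<le> hi" for x unfolding g_def using lohi by auto
      have aefg: "AE x in piM a1. f x = g x" using aehi aelo unfolding g_def by (auto elim!: AE_mp)
      have m0: "(LINT x:{0<..}|lborel. pd x * g x) = 0"
      proof -
        have "(LINT x:{0<..}|lborel. pd x * g x) = (\<integral>x. g x \<partial>piM a1)" by (rule int_piM[symmetric]) simp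
        also have "\<dots> = (\<integral>x. f x \<partial>piM a1)"
          by (rule integral_cong_AE) (use aefg in \<open>auto simp: piM_def elim!: AE_mp\<close>)
        finally show ?thesis using f0 by simp
      qed
      have "(\<integral>x. ((imh_P a1 a2 ^^ n) f x)\<^sup>2 \<partial>piM a1) = (LINT x:{0<..}|lborel. pd x * ((P ^^ n) g x)\<^sup>2)"
        by (rule bridge) (use AE_piM_D[OF aefg] in auto)
      also have "\<dots> \<le> 2 * (hi - lo)\<^sup>2 * (1 + (a2 / a1)\<^sup>2) * (LINT s:{0<..}|lborel. rh s ^ (n - 1) * pd s)"
        by (rule L2_bound[OF gm glo ghi m0 n])
      also have "\<dots> \<le> 2 * (hi - lo)\<^sup>2 * (1 + (a2 / a1)\<^sup>2) * (C0 * np)"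
        using L_bound[OF n] unfolding C0_def np_def by (intro mult_left_mono) auto
      also have "\<dots> \<le> C * (hi - lo)\<^sup>2 * np"
        unfolding C_def using np0 by (simp add: algebra_simps)
      finally have "(\<integral>x. ((imh_P a1 a2 ^^ n) f x)\<^sup>2 \<partial>piM a1) \<le> C * (hi - lo)\<^sup>2 * np" .
      thus ?thesis unfolding oscK np_def by simp
    qed
  qed
qed

end
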